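(* Let $X$ be an FK-space containing $\phi$. The following are equivalent: (i) $X$ has $F\sigma_p^q[K]$; (ii) $X\subseteq(D_p^qS)^{dd}$; (iii) $X\subseteq(D_p^qW)^{dd}$; (iv) $X\subseteq(D_p^qF)^{dd}$; (v) $X^d=(D_p^qS)^d$; (vi) $X^d=(D_p^qF)^d$. Here the subspaces are computed in $X$.
   Context: An FK-space is a vector subspace of the space $w$ of all complex sequences with a complete metrizable locally convex topology in which coordinate functionals are continuous; $X'$ is its continuous dual. $\delta^j$ has $1$ in position $j$, $0$ elsewhere; $\phi=\operatorname{span}\{\delta^j\}$. $p(n)<q(n)$ are nonnegative integer sequences with $q(n)\to\infty$. For $x\in w$, $x^{(k)}=\sum_{j=1}^kx_j\delta^j$ and $T_n(x)=\frac{1}{q(n)-p(n)}\sum_{k=p(n)+1}^{q(n)}x^{(k)}$. $D_p^qS=\{x\in X: T_n(x)\to x\text{ in }X\}$; $D_p^qW=\{x\in X: f(T_n(x))\to f(x)\ \forall f\in X'\}$; $D_p^qF^+=\{x\in w:\lim_n f(T_n(x))\text{ exists }\forall f\in X'\}$, where $f(T_n(x))=\frac{1}{q(n)-p(n)}\sum_{k=p(n)+1}^{q(n)}\sum_{j=1}^kx_jf(\delta^j)$; $D_p^qF=D_p^qF^+\cap X$. $X$ has $F\sigma_p^q[K]$ if $X\subseteq D_p^qF^+$. $\sigma_p^q[s]=\{x:\lim_n\frac{1}{q(n)-p(n)}\sum_{k=p(n)+1}^{q(n)}\sum_{j=1}^kx_j\text{ exists}\}$; for $E\subseteq w$, $E^d=\{x\in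 w:(x_ny_n)_n\in\sigma_p^q[s]\ \forall y\in E\}$, $E^{dd}=(E^d)^d$. *)

theory Defs
  imports "HOL-Analysis.Analysis"
begin

type_synonym cseq = "nat \<Rightarrow> complex"

text \<open>Sequences are indexed from 0 (coordinate j of the paper is index j-1 here).\<close>

definition phi :: "cseq set" where
  "phi = {x. finite {j. x j \<noteq> 0}}"

definition unit_seq :: "nat \<Rightarrow> cseq" where
  "unit_seq j = (\<lambda>i. if i = j then 1 else 0)"

text \<open>Locally convex metrizable topology on X given by a countable family of seminorms P k.\<close>
definition seminorm_on :: "cseq set \<Rightarrow> (cseq \<Rightarrow> real) \<Rightarrow> bool" where
  "seminorm_on X s \<longleftrightarrow>
     (\<forall>x\<in>X. 0 \<le> s x) \<and>
     (\<forall>x\<in>X. \<forall>c. s (\<lambda>j. c * x j) = norm c * s x) \<and>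
     (\<forall>x\<in>X. \<forall>y\<in>X. s (\<lambda>j. x j + y j) \<le> s x + s y)"

definition subspace_w :: "cseq set \<Rightarrow> bool" where
  "subspace_w X \<longleftrightarrow> (\<lambda>j. 0) \<in> X \<and>
     (\<forall>x\<in>X. \<forall>y\<in>X. (\<lambda>j. x j + y j) \<in> X) \<and>
     (\<forall>x\<in>X. \<forall>c. (\<lambda>j. c * x j) \<in> X)"

definition FK_space :: "cseq set \<Rightarrow> (nat \<Rightarrow> cseq \<Rightarrow> real) \<Rightarrow> bool" where
  "FK_space X P \<longleftrightarrow>
     subspace_w X \<and>
     (\<forall>k. seminorm_on X (P k)) \<and>
     (\<forall>j. \<exists>N C. \<forall>x\<in>X. norm (x j) \<le> C * (\<Sum>k\<le>N. P k x)) \<and>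
     (\<forall>s. (\<forall>n. s n \<in> X) \<and>
          (\<forall>k. \<forall>e>0. \<exists>M. \<forall>m\<ge>M. \<forall>n\<ge>M. P k (\<lambda>j. s m j - s n j) < e)
        \<longrightarrow> (\<exists>x\<in>X. \<forall>k. (\<lambda>n. P k (\<lambda>j. s n j - x j)) \<longlonglongrightarrow> 0))"

definition cdual :: "cseq set \<Rightarrow> (nat \<Rightarrow> cseq \<Rightarrow> real) \<Rightarrow> (cseq \<Rightarrow> complex) set" where
  "cdual X P = {f.
     (\<forall>x\<in>X. \<forall>y\<in>X. f (\<lambda>j. x j + y j) = f x + f y) \<and>
     (\<forall>x\<in>X. \<forall>c. f (\<lambda>j. c * x j) = c * f x) \<and>
     (\<exists>N C. \<forall>x\<in>X. norm (f x) \<le> C * (\<Sum>k\<le>N. P k x))}"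

definition sect :: "cseq \<Rightarrow> nat \<Rightarrow> cseq" where
  "sect x k = (\<lambda>j. if j < k then x j else 0)"

definition Tn :: "(nat \<Rightarrow> nat) \<Rightarrow> (nat \<Rightarrow> nat) \<Rightarrow> nat \<Rightarrow> cseq \<Rightarrow> cseq" where
  "Tn p q n x = (\<lambda>j. (1 / of_nat (q n - p n)) * (\<Sum>k\<in>{p n<..q n}. sect x k j))"

definition DS :: "cseq set \<Rightarrow> (nat \<Rightarrow> cseq \<Rightarrow> real) \<Rightarrow> (nat \<Rightarrow> nat) \<Rightarrow> (nat \<Rightarrow> nat) \<Rightarrow> cseq set" where
  "DS X P p q = {x\<in>X. \<forall>k. (\<lambda>n. P k (\<lambda>j. Tn p q n x j - x j)) \<longlonglongrightarrow> 0}"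

definition DW :: "cseq set \<Rightarrow> (nat \<Rightarrow> cseq \<Rightarrow> real) \<Rightarrow> (nat \<Rightarrow> nat) \<Rightarrow> (nat \<Rightarrow> nat) \<Rightarrow> cseq set" where
  "DW X P p q = {x\<in>X. \<forall>f\<in>cdual X P. (\<lambda>n. f (Tn p q n x)) \<longlonglongrightarrow> f x}"

definition DFplus :: "cseq set \<Rightarrow> (nat \<Rightarrow> cseq \<Rightarrow> real) \<Rightarrow> (nat \<Rightarrow> nat) \<Rightarrow> (nat \<Rightarrow> nat) \<Rightarrow> cseq set" where
  "DFplus X P p q = {x. \<forall>f\<in>cdual X P. convergent (\<lambda>n.
      (1 / of_nat (q n - p n)) * (\<Sum>k\<in>{p n<..q n}. \<Sum>j<k. x j * f (unit_seq j)))}"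

definition DF :: "cseq set \<Rightarrow> (nat \<Rightarrow> cseq \<Rightarrow> real) \<Rightarrow> (nat \<Rightarrow> nat) \<Rightarrow> (nat \<Rightarrow> nat) \<Rightarrow> cseq set" where
  "DF X P p q = DFplus X P p q \<inter> X"

definition has_Fsigma :: "cseq set \<Rightarrow> (nat \<Rightarrow> cseq \<Rightarrow> real) \<Rightarrow> (nat \<Rightarrow> nat) \<Rightarrow> (nat \<Rightarrow> nat) \<Rightarrow> bool" where
  "has_Fsigma X P p q \<longleftrightarrow> X \<subseteq> DFplus X P p q"

definition sigma_s :: "(nat \<Rightarrow> nat) \<Rightarrow> (nat \<Rightarrow> nat) \<Rightarrow> cseq set" where
  "sigma_s p q = {x. convergent (\<lambda>n.
      (1 / of_nat (q n - p n)) * (\<Sum>k\<in>{p n<..q n}. \<Sum>j<k. x j))}"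

definition ddual :: "(nat \<Rightarrow> nat) \<Rightarrow> (nat \<Rightarrow> nat) \<Rightarrow> cseq set \<Rightarrow> cseq set" where
  "ddual p q E = {x. \<forall>y\<in>E. (\<lambda>n. x n * y n) \<in> sigma_s p q}"

end

theory Submission
  imports Defs
begin

locale fk =
  fixes X :: "cseq set" and P :: "nat \<Rightarrow> cseq \<Rightarrow> real"
  assumes FK: "FK_space X P" and phiX: "phi \<subseteq> X"
begin

lemma FK_sub: "subspace_w X"
  using FK unfolding FK_space_def by (rule conjunct1)
lemma FK_semi0: "\<forall>k. seminorm_on X (P k)"
  using FK unfolding FK_space_def by (rule conjunct1[OF conjunct2])
lemma FK_semi: "seminorm_on X (P k)"
  using FK_semi0 by (rule spec)
lemma FK_coord: "\<forall>j. \<exists>N C. \<forall>x\<in>X. norm (x j) \<le> C * (\<Sum>k\<le>N. P k x)"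
  using FK unfolding FK_space_def by (rule conjunct1[OF conjunct2[OF conjunct2]])
lemma FK_compl: "\<forall>s. (\<forall>n. s n \<in> X) \<and>
          (\<forall>k. \<forall>e>0. \<exists>M. \<forall>m\<ge>M. \<forall>n\<ge>M. P k (\<lambda>j. s m j - s n j) < e)
        \<longrightarrow> (\<exists>x\<in>X. \<forall>k. (\<lambda>n. P k (\<lambda>j. s n j - x j)) \<longlonglongrightarrow> 0)"
  using FK unfolding FK_space_def by (rule conjunct2[OF conjunct2[OF conjunct2]])

lemma zeroX: "(\<lambda>j. 0) \<in> X"
  using FK_sub unfolding subspace_w_def by (rule conjunct1)
lemma addX: "x \<in> X \<Longrightarrow> y \<in> X \<Longrightarrow> (\<lambda>j. x j + y j) \<in> X"
  using FK_sub unfolding subspace_w_def by blast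
lemma smulX: "x \<in> X \<Longrightarrow> (\<lambda>j. c * x j) \<in> X"
  using FK_sub unfolding subspace_w_def by blast
lemma diffX: "x \<in> X \<Longrightarrow> y \<in> X \<Longrightarrow> (\<lambda>j. x j - y j) \<in> X"
proof -
  assume a: "x \<in> X" "y \<in> X"
  have "(\<lambda>j. x j - y j) = (\<lambda>j. x j + (\<lambda>j. (-1) * y j) j)" by auto
  moreover have "(\<lambda>j. x j + (\<lambda>j. (-1) * y j) j) \<in> X" using a by (intro addX smulX)
  ultimately show ?thesis by simp
qed
lemma P_nonneg: "x \<in> X \<Longrightarrow> 0 \<le> P k x"
  using FK_semi unfolding seminorm_on_def by blast
lemma P_smul: "x \<in> X \<Longrightarrow> P k (\<lambda>j. c * x j) = norm c * P k x"
  using FK_semi unfolding seminorm_on_def by blast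
lemma P_add: "x \<in> X \<Longrightarrow> y \<in> X \<Longrightarrow> P k (\<lambda>j. x j + y j) \<le> P k x + P k y"
  using FK_semi unfolding seminorm_on_def by blast
lemma coord: "\<exists>N C. \<forall>x\<in>X. norm (x j) \<le> C * (\<Sum>k\<le>N. P k x)"
  using FK_coord by (rule spec)
lemma complete: "(\<forall>n. s n \<in> X) \<Longrightarrow>
          (\<forall>k. \<forall>e>0. \<exists>M. \<forall>m\<ge>M. \<forall>n\<ge>M. P k (\<lambda>j. s m j - s n j) < e)
        \<Longrightarrow> (\<exists>x\<in>X. \<forall>k. (\<lambda>n. P k (\<lambda>j. s n j - x j)) \<longlonglongrightarrow> 0)"
  using spec[OF FK_compl, of s] by blast

lemma P_zero: "P k (\<lambda>j. 0) = 0"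
proof -
  have "P k (\<lambda>j. 0 * (\<lambda>j. 0) j) = norm (0::complex) * P k (\<lambda>j. 0)"
    using P_smul zeroX by blast
  then show ?thesis by simp
qed
lemma P_neg: "x \<in> X \<Longrightarrow> P k (\<lambda>j. - x j) = P k x"
  using P_smul[of x k "-1"] by simp
lemma P_sym: "x \<in> X \<Longrightarrow> y \<in> X \<Longrightarrow> P k (\<lambda>j. x j - y j) = P k (\<lambda>j. y j - x j)"
proof -
  assume a: "x \<in> X" "y \<in> X"
  have "P k (\<lambda>j. - (\<lambda>j. y j - x j) j) = P k (\<lambda>j. y j - x j)"
    using P_neg diffX a by blast
  then show ?thesis by simp
qed
lemma P_tri: "x \<in> X \<Longrightarrow> y \<in> X \<Longrightarrow> z \<in> X \<Longrightarrow>
   P k (\<lambda>j. x j - z j) \<le> P k (\<lambda>j. x j - y j) + P k (\<lambda>j. y j - z j)"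
proof -
  assume a: "x \<in> X" "y \<in> X" "z \<in> X"
  have e: "(\<lambda>j. x j - z j) = (\<lambda>j. (\<lambda>j. x j - y j) j + (\<lambda>j. y j - z j) j)" by auto
  have "P k (\<lambda>j. (\<lambda>j. x j - y j) j + (\<lambda>j. y j - z j) j) \<le> P k (\<lambda>j. x j - y j) + P k (\<lambda>j. y j - z j)"
    using a by (intro P_add diffX)
  then show ?thesis by (subst e)
qed
lemma P_sub: "x \<in> X \<Longrightarrow> y \<in> X \<Longrightarrow> P k (\<lambda>j. x j - y j) \<le> P k x + P k y"
proof -
  assume a: "x \<in> X" "y \<in> X"
  have "(\<lambda>j. x j - y j) = (\<lambda>j. x j + (\<lambda>j. - y j) j)" by auto
  have m: "(\<lambda>j. - y j) \<in> X" using smulX[OF a(2), of "-1"] by simp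
  have "P k (\<lambda>j. x j + (\<lambda>j. - y j) j) \<le> P k x + P k (\<lambda>j. - y j)" by (rule P_add[OF a(1) m])
  then have "P k (\<lambda>j. x j - y j) \<le> P k x + P k (\<lambda>j. - y j)" by simp
  then show ?thesis using P_neg a by simp
qed
lemma P_rev_tri: "x \<in> X \<Longrightarrow> y \<in> X \<Longrightarrow> \<bar>P k x - P k y\<bar> \<le> P k (\<lambda>j. x j - y j)"
proof -
  assume a: "x \<in> X" "y \<in> X"
  have "P k x \<le> P k (\<lambda>j. x j - y j) + P k y"
    using P_tri[of x y "\<lambda>j. 0" k] a zeroX by simp
  moreover have "P k y \<le> P k (\<lambda>j. y j - x j) + P k x"
    using P_tri[of y x "\<lambda>j. 0" k] a zeroX by simp
  ultimately show ?thesis using P_sym[OF a, of k] by linarith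
qed

abbreviation SN :: "nat \<Rightarrow> cseq \<Rightarrow> real" where "SN N x \<equiv> (\<Sum>k\<le>N. P k x)"

lemma SN_nonneg: "x \<in> X \<Longrightarrow> 0 \<le> SN N x"
  by (simp add: P_nonneg sum_nonneg)
lemma SN_mono: "x \<in> X \<Longrightarrow> N \<le> N' \<Longrightarrow> SN N x \<le> SN N' x"
  by (rule sum_mono2) (auto simp: P_nonneg)
lemma P_le_SN: "x \<in> X \<Longrightarrow> k \<le> N \<Longrightarrow> P k x \<le> SN N x"
proof -
  assume "x \<in> X" "k \<le> N"
  then have "(\<Sum>i\<in>{k}. P i x) \<le> SN N x"
    by (intro sum_mono2) (auto simp: P_nonneg)
  then show ?thesis by simp
qed

definition contf :: "(cseq \<Rightarrow> real) \<Rightarrow> bool" where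
  "contf \<phi> \<longleftrightarrow> (\<exists>N C. \<forall>x\<in>X. \<phi> x \<le> C * SN N x)"

lemma contfD: "contf \<phi> \<Longrightarrow> \<exists>N C. C \<ge> 0 \<and> (\<forall>x\<in>X. \<phi> x \<le> C * SN N x)"
proof -
  assume "contf \<phi>"
  then obtain N C where h: "\<forall>x\<in>X. \<phi> x \<le> C * SN N x" unfolding contf_def by blast
  have "\<forall>x\<in>X. \<phi> x \<le> max C 0 * SN N x"
  proof
    fix x assume "x \<in> X"
    then have "C * SN N x \<le> max C 0 * SN N x" using SN_nonneg
      by (intro mult_right_mono) auto
    then show "\<phi> x \<le> max C 0 * SN N x" using h \<open>x\<in>X\<close> by force
  qed
  then show ?thesis by (intro exI[of _ N] exI[of _ "max C 0"]) auto
qed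

lemma contf_add: "contf f \<Longrightarrow> contf g \<Longrightarrow> contf (\<lambda>x. f x + g x)"
proof -
  assume "contf f" "contf g"
  then obtain N1 C1 N2 C2 where h1: "C1 \<ge> 0" "\<forall>x\<in>X. f x \<le> C1 * SN N1 x"
    and h2: "C2 \<ge> 0" "\<forall>x\<in>X. g x \<le> C2 * SN N2 x" using contfD by metis
  have "\<forall>x\<in>X. f x + g x \<le> (C1 + C2) * SN (max N1 N2) x"
  proof
    fix x assume x: "x \<in> X"
    have "C1 * SN N1 x \<le> C1 * SN (max N1 N2) x"
      using h1 x SN_mono by (intro mult_left_mono) auto
    moreover have "C2 * SN N2 x \<le> C2 * SN (max N1 N2) x"
      using h2 x SN_mono by (intro mult_left_mono) auto
    moreover have "f x \<le> C1 * SN N1 x" "g x \<le> C2 * SN N2 x" using h1 h2 x by auto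
    ultimately show "f x + g x \<le> (C1 + C2) * SN (max N1 N2) x"
      unfolding distrib_right by linarith
  qed
  then show ?thesis unfolding contf_def by blast
qed

lemma contf_scale: "contf f \<Longrightarrow> a \<ge> 0 \<Longrightarrow> contf (\<lambda>x. a * f x)"
proof -
  assume "contf f" "a \<ge> 0"
  then obtain N C where h: "C \<ge> 0" "\<forall>x\<in>X. f x \<le> C * SN N x" using contfD by metis
  have "\<forall>x\<in>X. a * f x \<le> (a * C) * SN N x"
  proof
    fix x assume "x \<in> X"
    then have "a * f x \<le> a * (C * SN N x)" using h \<open>a\<ge>0\<close> by (intro mult_left_mono) auto
    then show "a * f x \<le> (a * C) * SN N x" by (simp add: mult.assoc)
  qed
  then show ?thesis unfolding contf_def by blast
qed

lemma contf_zero: "contf (\<lambda>x. 0)"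
  unfolding contf_def by (rule exI[of _ 0], rule exI[of _ 0]) auto

lemma contf_sum: "finite J \<Longrightarrow> (\<And>j. j \<in> J \<Longrightarrow> contf (f j)) \<Longrightarrow> contf (\<lambda>x. \<Sum>j\<in>J. f j x)"
proof (induction J rule: finite_induct)
  case empty then show ?case using contf_zero by simp
next
  case (insert a J)
  then show ?case using contf_add[of "f a" "\<lambda>x. \<Sum>j\<in>J. f j x"] by simp
qed

lemma contf_coord: "contf (\<lambda>x. norm (x j))"
  using coord unfolding contf_def by blast

lemma contf_P: "contf (P k)"
  unfolding contf_def using P_le_SN by (intro exI[of _ k] exI[of _ 1]) auto

lemma contf_mono: "contf g \<Longrightarrow> (\<And>x. x \<in> X \<Longrightarrow> f x \<le> g x) \<Longrightarrow> contf f"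
proof -
  assume "contf g" and h: "\<And>x. x \<in> X \<Longrightarrow> f x \<le> g x"
  then obtain N C where "\<forall>x\<in>X. g x \<le> C * SN N x" unfolding contf_def by blast
  then have "\<forall>x\<in>X. f x \<le> C * SN N x" using h by force
  then show ?thesis unfolding contf_def by blast
qed

end

definition coef :: "(nat \<Rightarrow> nat) \<Rightarrow> (nat \<Rightarrow> nat) \<Rightarrow> nat \<Rightarrow> nat \<Rightarrow> complex" where
  "coef p q n j = of_nat (card {k\<in>{p n<..q n}. j < k}) / of_nat (q n - p n)"

definition avg :: "(nat \<Rightarrow> nat) \<Rightarrow> (nat \<Rightarrow> nat) \<Rightarrow> nat \<Rightarrow> cseq \<Rightarrow> complex" where
  "avg p q n a = (1 / of_nat (q n - p n)) * (\<Sum>k\<in>{p n<..q n}. \<Sum>j<k. a j)"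

lemma sigma_s_avg: "sigma_s p q = {a. convergent (\<lambda>n. avg p q n a)}"
  unfolding sigma_s_def avg_def by simp

lemma sum_if_const: "finite A \<Longrightarrow> (\<Sum>k\<in>A. if Q k then c else 0) = of_nat (card {k\<in>A. Q k}) * (c::complex)"
proof -
  assume A: "finite A"
  have "sum (\<lambda>_. c) (A \<inter> {k. Q k}) = (\<Sum>k\<in>A. if k \<in> {k. Q k} then c else 0)"
    using A by (rule sum.inter_restrict)
  moreover have "A \<inter> {k. Q k} = {k\<in>A. Q k}" by auto
  ultimately show ?thesis by simp
qed

lemma Tn_coef: "Tn p q n x = (\<lambda>i. coef p q n i * x i)"
proof
  fix i
  have "(\<Sum>k\<in>{p n<..q n}. sect x k i) = (\<Sum>k\<in>{k\<in>{p n<..q n}. i < k}. x i)"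
    unfolding sect_def by (simp add: sum_if_const)
  also have "\<dots> = of_nat (card {k\<in>{p n<..q n}. i < k}) * x i" by simp
  finally show "Tn p q n x i = coef p q n i * x i"
    unfolding Tn_def coef_def by simp
qed

lemma coef_zero: "q n \<le> i \<Longrightarrow> coef p q n i = 0"
proof -
  assume "q n \<le> i"
  then have "{k\<in>{p n<..q n}. i < k} = {}" by auto
  then show ?thesis unfolding coef_def by simp
qed

lemma sum_swap_lemma:
  fixes a :: "nat \<Rightarrow> complex"
  assumes "finite K" "\<And>k. k \<in> K \<Longrightarrow> k \<le> Q"
  shows "(\<Sum>k\<in>K. \<Sum>j<k. a j) = (\<Sum>j<Q. of_nat (card {k\<in>K. j < k}) * a j)"
proof -
  have "(\<Sum>k\<in>K. \<Sum>j<k. a j) = (\<Sum>k\<in>K. \<Sum>j<Q. if j < k then a j else 0)"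
  proof (rule sum.cong[OF refl])
    fix k assume "k \<in> K"
    then have kq: "k \<le> Q" using assms by auto
    have "(\<Sum>j<Q. if j < k then a j else 0) = (\<Sum>j<Q. if j \<in> {..<k} then a j else 0)" by simp
    also have "\<dots> = sum a ({..<Q} \<inter> {..<k})" by (rule sum.inter_restrict[symmetric]) simp
    also have "{..<Q} \<inter> {..<k} = {..<k}" using kq by auto
    finally show "(\<Sum>j<k. a j) = (\<Sum>j<Q. if j < k then a j else 0)" by simp
  qed
  also have "\<dots> = (\<Sum>j<Q. \<Sum>k\<in>K. if j < k then a j else 0)"
    by (rule sum.swap)
  also have "\<dots> = (\<Sum>j<Q. of_nat (card {k\<in>K. j < k}) * a j)"
  proof (rule sum.cong[OF refl])
    fix j
    have "(\<Sum>k\<in>K. if j < k then a j else 0) = of_nat (card {k\<in>K. j < k}) * a j"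
      using assms(1) by (rule sum_if_const)
    then show "(\<Sum>k\<in>K. if j < k then a j else 0) = of_nat (card {k\<in>K. j < k}) * a j" by simp
  qed
  finally show ?thesis .
qed

lemma avg_coef: "avg p q n a = (\<Sum>j<q n. coef p q n j * a j)"
proof -
  have "(\<Sum>k\<in>{p n<..q n}. \<Sum>j<k. a j) = (\<Sum>j<q n. of_nat (card {k\<in>{p n<..q n}. j < k}) * a j)"
    by (rule sum_swap_lemma) auto
  then show ?thesis unfolding avg_def coef_def
    by (simp add: sum_distrib_left field_simps)
qed

lemma unit_phi: "unit_seq j \<in> phi"
  unfolding phi_def unit_seq_def by simp

lemma lc_phi: "finite J \<Longrightarrow> (\<lambda>i. \<Sum>j\<in>J. b j * unit_seq j i) \<in> phi"
proof -
  assume J: "finite J"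
  have "{i. (\<Sum>j\<in>J. b j * unit_seq j i) \<noteq> 0} \<subseteq> J"
  proof
    fix i assume "i \<in> {i. (\<Sum>j\<in>J. b j * unit_seq j i) \<noteq> 0}"
    then have "(\<Sum>j\<in>J. b j * unit_seq j i) \<noteq> 0" by simp
    then obtain j where "j \<in> J" "b j * unit_seq j i \<noteq> 0"
      using sum.neutral[of J "\<lambda>j. b j * unit_seq j i"] by blast
    then show "i \<in> J" unfolding unit_seq_def by (auto split: if_splits)
  qed
  then show ?thesis unfolding phi_def using J finite_subset by auto
qed

lemma Tn_lc: "Tn p q n x = (\<lambda>i. \<Sum>j<q n. (coef p q n j * x j) * unit_seq j i)"
proof
  fix i
  have "(\<Sum>j<q n. (coef p q n j * x j) * unit_seq j i) = (if i < q n then coef p q n i * x i else 0)"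
    unfolding unit_seq_def by (simp add: if_distrib sum.delta' cong: if_cong)
  then show "Tn p q n x i = (\<Sum>j<q n. (coef p q n j * x j) * unit_seq j i)"
    unfolding Tn_coef using coef_zero[of q n i p] by auto
qed

lemma Tn_phi: "Tn p q n x \<in> phi"
  unfolding Tn_lc by (rule lc_phi) simp

context fk
begin

lemma lc_X: "finite J \<Longrightarrow> (\<lambda>i. \<Sum>j\<in>J. b j * unit_seq j i) \<in> X"
  using lc_phi phiX by blast

lemma unitX: "unit_seq j \<in> X" using unit_phi phiX by blast

lemma TnX: "Tn p q n x \<in> X" using Tn_phi phiX by blast

lemma lin_lc:
  assumes add: "\<forall>x\<in>X. \<forall>y\<in>X. f (\<lambda>j. x j + y j) = f x + f y"
    and sm: "\<forall>x\<in>X. \<forall>c. f (\<lambda>j. c * x j) = c * f x"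
    and J: "finite J"
  shows "f (\<lambda>i. \<Sum>j\<in>J. b j * unit_seq j i) = (\<Sum>j\<in>J. b j * f (unit_seq j))"
  using J
proof (induction J rule: finite_induct)
  case empty
  have "f (\<lambda>j. 0 * (\<lambda>j. 0) j) = 0 * f (\<lambda>j. 0)" by (rule sm[rule_format, OF zeroX])
  then show ?case by simp
next
  case (insert a J)
  have e: "(\<lambda>i. \<Sum>j\<in>insert a J. b j * unit_seq j i) =
        (\<lambda>i. (\<lambda>i. b a * unit_seq a i) i + (\<lambda>i. \<Sum>j\<in>J. b j * unit_seq j i) i)"
    using insert by simp
  have "f (\<lambda>i. (\<lambda>i. b a * unit_seq a i) i + (\<lambda>i. \<Sum>j\<in>J. b j * unit_seq j i) i)
     = f (\<lambda>i. b a * unit_seq a i) + f (\<lambda>i. \<Sum>j\<in>J. b j * unit_seq j i)"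
    using insert(1) by (intro add[rule_format] smulX unitX lc_X)
  also have "\<dots> = b a * f (unit_seq a) + (\<Sum>j\<in>J. b j * f (unit_seq j))"
    using sm unitX insert by simp
  finally show ?case using e insert by simp
qed

lemma P_lc:
  assumes J: "finite J"
  shows "P k (\<lambda>i. \<Sum>j\<in>J. b j * unit_seq j i) \<le> (\<Sum>j\<in>J. norm (b j) * P k (unit_seq j))"
  using J
proof (induction J rule: finite_induct)
  case empty
  then show ?case using P_zero by simp
next
  case (insert a J)
  have e: "(\<lambda>i. \<Sum>j\<in>insert a J. b j * unit_seq j i) =
        (\<lambda>i. (\<lambda>i. b a * unit_seq a i) i + (\<lambda>i. \<Sum>j\<in>J. b j * unit_seq j i) i)"
    using insert by simp
  have "P k (\<lambda>i. (\<lambda>i. b a * unit_seq a i) i + (\<lambda>i. \<Sum>j\<in>J. b j * unit_seq j i) i)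
     \<le> P k (\<lambda>i. b a * unit_seq a i) + P k (\<lambda>i. \<Sum>j\<in>J. b j * unit_seq j i)"
    using insert by (intro P_add smulX unitX lc_X)
  also have "\<dots> \<le> norm (b a) * P k (unit_seq a) + (\<Sum>j\<in>J. norm (b j) * P k (unit_seq j))"
    using P_smul unitX insert by simp
  finally show ?case using e insert by simp
qed

lemma f_Tn:
  assumes add: "\<forall>x\<in>X. \<forall>y\<in>X. f (\<lambda>j. x j + y j) = f x + f y"
    and sm: "\<forall>x\<in>X. \<forall>c. f (\<lambda>j. c * x j) = c * f x"
  shows "f (Tn p q n x) = avg p q n (\<lambda>j. x j * f (unit_seq j))"
proof -
  have "f (Tn p q n x) = (\<Sum>j<q n. (coef p q n j * x j) * f (unit_seq j))"
    unfolding Tn_lc by (rule lin_lc[OF add sm]) simp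
  then show ?thesis by (simp add: avg_coef mult.assoc)
qed

end

lemma coef_lim:
  assumes pq: "\<And>n. p n < q n" and ql: "filterlim q at_top sequentially"
  shows "(\<lambda>n. coef p q n j) \<longlonglongrightarrow> 1"
proof -
  have rq: "filterlim (\<lambda>n. real (q n)) at_top sequentially"
    by (rule filterlim_compose[OF filterlim_real_sequentially ql])
  have g0: "(\<lambda>n. real j / real (q n)) \<longlonglongrightarrow> 0"
    by (rule tendsto_divide_0[OF tendsto_const filterlim_at_top_imp_at_infinity[OF rq]])
  have ev: "eventually (\<lambda>n. Suc j \<le> q n) sequentially"
    using ql unfolding filterlim_at_top by blast
  have "eventually (\<lambda>n. norm (coef p q n j - 1) \<le> real j / real (q n)) sequentially"
    using ev
  proof (rule eventually_mono)
    fix n assume jq: "Suc j \<le> q n"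
    have pqn: "p n < q n" by (rule pq)
    have set: "{k\<in>{p n<..q n}. j < k} = {max (p n) j<..q n}" by auto
    have card: "card {k\<in>{p n<..q n}. j < k} = q n - max (p n) j" unfolding set by simp
    show "norm (coef p q n j - 1) \<le> real j / real (q n)"
    proof (cases "j \<le> p n")
      case True
      then have "coef p q n j = 1" unfolding coef_def card using pqn
        by (simp add: max_def)
      then show ?thesis by simp
    next
      case False
      then have mx: "max (p n) j = j" by simp
      have qpos: "real (q n - p n) > 0" using pqn by simp
      have c: "coef p q n j = complex_of_real ((real (q n) - real j) / (real (q n) - real (p n)))"
        unfolding coef_def card mx using jq pqn by (simp add: of_nat_diff)
      have "coef p q n j - 1 = complex_of_real ((real (p n) - real j) / (real (q n) - real (p n)))"
        unfolding c using pqn by (simp add: field_simps)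
      then have "norm (coef p q n j - 1) = \<bar>(real (p n) - real j) / (real (q n) - real (p n))\<bar>"
        by (simp only: norm_of_real)
      also have "\<dots> = \<bar>real (p n) - real j\<bar> / \<bar>real (q n) - real (p n)\<bar>" by (rule abs_divide)
      also have "\<dots> = (real j - real (p n)) / (real (q n) - real (p n))"
        using False pqn by simp
      also have "\<dots> \<le> real j / real (q n)"
      proof -
        have h1: "real (q n) - real (p n) > 0" using pqn by simp
        have h2: "real (q n) > 0" using pqn by simp
        have "(real j - real (p n)) * real (q n) \<le> real j * (real (q n) - real (p n))"
        proof -
          have "real j \<le> real (q n)" using jq by simp
          then have "real j * real (p n) \<le> real (q n) * real (p n)" by (rule mult_right_mono) simp
          then show ?thesis by (simp add: algebra_simps)
        qed
        then show ?thesis using h1 h2 by (simp add: divide_simps)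
      qed
      finally show ?thesis .
    qed
  qed
  then have "(\<lambda>n. coef p q n j - 1) \<longlonglongrightarrow> 0"
    using g0 by (rule Lim_null_comparison)
  then show ?thesis by (rule LIM_zero_cancel)
qed


lemma ddual_anti: "A \<subseteq> B \<Longrightarrow> ddual p q B \<subseteq> ddual p q A"
  unfolding ddual_def by blast

lemma ddual_dd: "E \<subseteq> ddual p q (ddual p q E)"
  unfolding ddual_def by (auto simp: mult.commute)

lemma mem_sigma: "(a \<in> sigma_s p q) = convergent (\<lambda>n. avg p q n a)"
  unfolding sigma_s_avg by simp

lemma Tn_diff: "Tn p q n (\<lambda>j. x j - y j) = (\<lambda>j. Tn p q n x j - Tn p q n y j)"
  unfolding Tn_coef by (simp add: algebra_simps)
lemma Tn_add: "Tn p q n (\<lambda>j. x j + y j) = (\<lambda>j. Tn p q n x j + Tn p q n y j)"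
  unfolding Tn_coef by (simp add: algebra_simps)
lemma Tn_smul: "Tn p q n (\<lambda>j. c * x j) = (\<lambda>j. c * Tn p q n x j)"
  unfolding Tn_coef by (simp add: algebra_simps)

context fk
begin

lemma cd_add: "f \<in> cdual X P \<Longrightarrow> x \<in> X \<Longrightarrow> y \<in> X \<Longrightarrow> f (\<lambda>j. x j + y j) = f x + f y"
  unfolding cdual_def by blast
lemma cd_smul: "f \<in> cdual X P \<Longrightarrow> x \<in> X \<Longrightarrow> f (\<lambda>j. c * x j) = c * f x"
  unfolding cdual_def by blast
lemma cd_diff: "f \<in> cdual X P \<Longrightarrow> x \<in> X \<Longrightarrow> y \<in> X \<Longrightarrow> f (\<lambda>j. x j - y j) = f x - f y"
proof -
  assume f: "f \<in> cdual X P" and a: "x \<in> X" "y \<in> X"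
  have m: "(\<lambda>j. (-1) * y j) \<in> X" using a by (intro smulX)
  have "f (\<lambda>j. x j + (\<lambda>j. (-1) * y j) j) = f x + f (\<lambda>j. (-1) * y j)" by (rule cd_add[OF f a(1) m])
  also have "f (\<lambda>j. (-1) * y j) = (-1) * f y" by (rule cd_smul[OF f a(2)])
  finally show ?thesis by simp
qed
lemma cd_bound: "f \<in> cdual X P \<Longrightarrow> contf (\<lambda>x. norm (f x))"
  unfolding cdual_def contf_def by blast
lemma cd_lin: "f \<in> cdual X P \<Longrightarrow> \<forall>x\<in>X. \<forall>y\<in>X. f (\<lambda>j. x j + y j) = f x + f y"
  unfolding cdual_def by blast
lemma cd_lin2: "f \<in> cdual X P \<Longrightarrow> \<forall>x\<in>X. \<forall>c. f (\<lambda>j. c * x j) = c * f x"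
  unfolding cdual_def by blast

lemma cd_Tn: "f \<in> cdual X P \<Longrightarrow> f (Tn p q n x) = avg p q n (\<lambda>j. x j * f (unit_seq j))"
  by (rule f_Tn[OF cd_lin cd_lin2])

lemma SN_tendsto0: "(\<And>k. (\<lambda>n. P k (s n)) \<longlonglongrightarrow> 0) \<Longrightarrow> (\<lambda>n. SN N (s n)) \<longlonglongrightarrow> 0"
proof -
  assume h: "\<And>k. (\<lambda>n. P k (s n)) \<longlonglongrightarrow> 0"
  have "(\<lambda>n. \<Sum>k\<le>N. P k (s n)) \<longlonglongrightarrow> (\<Sum>k\<le>N. 0)"
    by (rule tendsto_sum) (rule h)
  then show ?thesis by simp
qed

lemma contf_tendsto0:
  assumes c: "contf \<phi>" and s: "\<And>n. s n \<in> X" and h: "\<And>k. (\<lambda>n. P k (s n)) \<longlonglongrightarrow> 0"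
    and nn: "\<And>n. 0 \<le> \<phi> (s n)"
  shows "(\<lambda>n. \<phi> (s n)) \<longlonglongrightarrow> 0"
proof -
  obtain N C where C: "C \<ge> 0" "\<forall>x\<in>X. \<phi> x \<le> C * SN N x" using contfD[OF c] by blast
  have "(\<lambda>n. C * SN N (s n)) \<longlonglongrightarrow> C * 0"
    by (intro tendsto_mult tendsto_const SN_tendsto0 h)
  then have t: "(\<lambda>n. C * SN N (s n)) \<longlonglongrightarrow> 0" by simp
  have "eventually (\<lambda>n. norm (\<phi> (s n)) \<le> C * SN N (s n)) sequentially"
    using C s nn by (intro always_eventually) auto
  then show ?thesis using t by (rule Lim_null_comparison)
qed

end

locale fkpq = fk +
  fixes p q :: "nat \<Rightarrow> nat"
  assumes pq: "\<And>n. p n < q n" and ql: "filterlim q at_top sequentially"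
begin

abbreviation "DSx \<equiv> DS X P p q"
abbreviation "DWx \<equiv> DW X P p q"
abbreviation "DFx \<equiv> DF X P p q"
definition "Fs = {(\<lambda>j. f (unit_seq j)) | f. f \<in> cdual X P}"

lemma DS_X: "DSx \<subseteq> X" unfolding DS_def by blast
lemma DW_X: "DWx \<subseteq> X" unfolding DW_def by blast

lemma DS_DW: "DSx \<subseteq> DWx"
proof
  fix x assume x: "x \<in> DSx"
  then have xX: "x \<in> X" and t: "\<And>k. (\<lambda>n. P k (\<lambda>j. Tn p q n x j - x j)) \<longlonglongrightarrow> 0"
    unfolding DS_def by auto
  have "\<forall>f\<in>cdual X P. (\<lambda>n. f (Tn p q n x)) \<longlonglongrightarrow> f x"
  proof
    fix f assume f: "f \<in> cdual X P"
    have "(\<lambda>n. norm (f (\<lambda>j. Tn p q n x j - x j))) \<longlonglongrightarrow> 0"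
      using xX TnX by (intro contf_tendsto0[OF cd_bound[OF f] _ t] diffX) auto
    moreover have "\<And>n. f (\<lambda>j. Tn p q n x j - x j) = f (Tn p q n x) - f x"
      using xX TnX by (intro cd_diff[OF f])
    ultimately have "(\<lambda>n. norm (f (Tn p q n x) - f x)) \<longlonglongrightarrow> 0" by simp
    then have "(\<lambda>n. f (Tn p q n x) - f x) \<longlonglongrightarrow> 0" by (rule tendsto_norm_zero_cancel)
    then show "(\<lambda>n. f (Tn p q n x)) \<longlonglongrightarrow> f x" by (rule LIM_zero_cancel)
  qed
  then show "x \<in> DWx" unfolding DW_def using xX by blast
qed

lemma DFplus_Fs: "DFplus X P p q = ddual p q Fs"
  unfolding DFplus_def ddual_def Fs_def sigma_s_def by auto

lemma Fs_DW: "Fs \<subseteq> ddual p q DWx"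
proof
  fix u assume "u \<in> Fs"
  then obtain f where f: "f \<in> cdual X P" and u: "u = (\<lambda>j. f (unit_seq j))" unfolding Fs_def by blast
  have "\<forall>y\<in>DWx. (\<lambda>n. u n * y n) \<in> sigma_s p q"
  proof
    fix y assume "y \<in> DWx"
    then have "(\<lambda>n. f (Tn p q n y)) \<longlonglongrightarrow> f y" unfolding DW_def using f by blast
    then have "convergent (\<lambda>n. f (Tn p q n y))" unfolding convergent_def by blast
    then have "convergent (\<lambda>n. avg p q n (\<lambda>j. y j * u j))" using cd_Tn[OF f] u by simp
    then show "(\<lambda>n. u n * y n) \<in> sigma_s p q" unfolding mem_sigma by (simp add: mult.commute)
  qed
  then show "u \<in> ddual p q DWx" unfolding ddual_def by blast
qed

lemma Fs_DS: "Fs \<subseteq> ddual p q DSx"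
  using Fs_DW ddual_anti[OF DS_DW] by blast

lemma Fs_DF: "Fs \<subseteq> ddual p q DFx"
proof
  fix u assume "u \<in> Fs"
  then have "\<forall>y\<in>DFplus X P p q. (\<lambda>n. y n * u n) \<in> sigma_s p q"
    unfolding DFplus_Fs ddual_def by blast
  then show "u \<in> ddual p q DFx" unfolding ddual_def DF_def by (auto simp: mult.commute)
qed

lemma final_assembly:
  assumes HL: "has_Fsigma X P p q \<Longrightarrow> ddual p q DSx \<subseteq> ddual p q X"
  shows "(has_Fsigma X P p q \<longleftrightarrow> X \<subseteq> ddual p q (ddual p q DSx)) \<and>
         (has_Fsigma X P p q \<longleftrightarrow> X \<subseteq> ddual p q (ddual p q DWx)) \<and>
         (has_Fsigma X P p q \<longleftrightarrow> X \<subseteq> ddual p q (ddual p q DFx)) \<and>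
         (has_Fsigma X P p q \<longleftrightarrow> ddual p q X = ddual p q DSx) \<and>
         (has_Fsigma X P p q \<longleftrightarrow> ddual p q X = ddual p q DFx)"
proof -
  have H: "has_Fsigma X P p q \<longleftrightarrow> X \<subseteq> ddual p q Fs"
    unfolding has_Fsigma_def DFplus_Fs ..
  have dS: "ddual p q (ddual p q DSx) \<subseteq> ddual p q Fs" by (rule ddual_anti[OF Fs_DS])
  have dW: "ddual p q (ddual p q DWx) \<subseteq> ddual p q Fs" by (rule ddual_anti[OF Fs_DW])
  have dF: "ddual p q (ddual p q DFx) \<subseteq> ddual p q Fs" by (rule ddual_anti[OF Fs_DF])
  have XX: "X \<subseteq> ddual p q (ddual p q X)" by (rule ddual_dd)
  have SX: "ddual p q X \<subseteq> ddual p q DSx" by (rule ddual_anti[OF DS_X])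
  have SW: "ddual p q (ddual p q DSx) \<subseteq> ddual p q (ddual p q DWx)"
    by (rule ddual_anti[OF ddual_anti[OF DS_DW]])
  have FX: "has_Fsigma X P p q \<Longrightarrow> DFx = X"
    unfolding has_Fsigma_def DF_def by blast
  have v: "has_Fsigma X P p q \<longleftrightarrow> ddual p q X = ddual p q DSx"
  proof
    assume "has_Fsigma X P p q"
    then show "ddual p q X = ddual p q DSx" using HL SX by blast
  next
    assume e: "ddual p q X = ddual p q DSx"
    then show "has_Fsigma X P p q" using XX dS H by (metis subset_trans)
  qed
  have vi: "has_Fsigma X P p q \<longleftrightarrow> ddual p q X = ddual p q DFx"
  proof
    assume "has_Fsigma X P p q"
    then show "ddual p q X = ddual p q DFx" using FX by simp
  next
    assume e: "ddual p q X = ddual p q DFx"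
    then show "has_Fsigma X P p q" using XX dF H by (metis subset_trans)
  qed
  have ii: "has_Fsigma X P p q \<longleftrightarrow> X \<subseteq> ddual p q (ddual p q DSx)"
    using v XX dS H by (metis subset_trans)
  have iii: "has_Fsigma X P p q \<longleftrightarrow> X \<subseteq> ddual p q (ddual p q DWx)"
    using ii SW dW H by (meson subset_trans)
  have iv: "has_Fsigma X P p q \<longleftrightarrow> X \<subseteq> ddual p q (ddual p q DFx)"
    using FX XX dF H by (metis subset_trans)
  show ?thesis using ii iii iv v vi by blast
qed

end

definition vadd :: "cseq \<Rightarrow> cseq \<Rightarrow> cseq" where "vadd x y = (\<lambda>j. x j + y j)"
definition rsm :: "real \<Rightarrow> cseq \<Rightarrow> cseq" where "rsm t x = (\<lambda>j. complex_of_real t * x j)"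

definition hb_valid where
  "hb_valid V M s h G \<longleftrightarrow>
     (\<forall>x a b. (x,a) \<in> G \<longrightarrow> (x,b) \<in> G \<longrightarrow> a = b) \<and>
     (\<forall>x a. (x,a) \<in> G \<longrightarrow> x \<in> V) \<and>
     (\<forall>x\<in>M. (x, h x) \<in> G) \<and>
     (\<forall>x a y b. (x,a) \<in> G \<longrightarrow> (y,b) \<in> G \<longrightarrow> (vadd x y, a + b) \<in> G) \<and>
     (\<forall>x a t. (x,a) \<in> G \<longrightarrow> (rsm t x, t * a) \<in> G) \<and>
     (\<forall>x a. (x,a) \<in> G \<longrightarrow> a \<le> s x)"

lemma hb_extend:
  assumes Vadd: "\<And>x y. x \<in> V \<Longrightarrow> y \<in> V \<Longrightarrow> vadd x y \<in> V"
    and Vsm: "\<And>x t. x \<in> V \<Longrightarrow> rsm t x \<in> V"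
    and sadd: "\<And>x y. x \<in> V \<Longrightarrow> y \<in> V \<Longrightarrow> s (vadd x y) \<le> s x + s y"
    and ssm: "\<And>x t. x \<in> V \<Longrightarrow> s (rsm t x) = \<bar>t\<bar> * s x"
    and G: "hb_valid V M s h G"
    and M0: "(\<lambda>j. 0) \<in> M" and h0: "h (\<lambda>j. 0) = 0"
    and x0: "x0 \<in> V" "\<forall>a. (x0, a) \<notin> G"
  shows "\<exists>G'. hb_valid V M s h G' \<and> G \<subseteq> G' \<and> G' \<noteq> G"
proof -
  have Gf: "\<And>x a b. (x,a) \<in> G \<Longrightarrow> (x,b) \<in> G \<Longrightarrow> a = b"
    and GV: "\<And>x a. (x,a) \<in> G \<Longrightarrow> x \<in> V"
    and GM: "\<And>x. x \<in> M \<Longrightarrow> (x, h x) \<in> G"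
    and Gadd: "\<And>x a y b. (x,a) \<in> G \<Longrightarrow> (y,b) \<in> G \<Longrightarrow> (vadd x y, a + b) \<in> G"
    and Gsm: "\<And>x a t. (x,a) \<in> G \<Longrightarrow> (rsm t x, t * a) \<in> G"
    and Gs: "\<And>x a. (x,a) \<in> G \<Longrightarrow> a \<le> s x"
    using G unfolding hb_valid_def by blast+
  have G00: "((\<lambda>j. 0), 0) \<in> G" using GM[OF M0] h0 by simp
  define L where "L = {a - s (vadd y (rsm (-1) x0)) | y a. (y,a) \<in> G}"
  have key: "a - s (vadd y (rsm (-1) x0)) \<le> s (vadd z x0) - b"
    if "(y,a) \<in> G" "(z,b) \<in> G" for y a z b
  proof -
    have "a + b \<le> s (vadd y z)" using Gs[OF Gadd[OF that]] .
    also have "vadd y z = vadd (vadd y (rsm (-1) x0)) (vadd z x0)"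
      by (simp add: vadd_def rsm_def fun_eq_iff)
    also have "s \<dots> \<le> s (vadd y (rsm (-1) x0)) + s (vadd z x0)"
      using that GV x0 by (intro sadd Vadd Vsm) auto
    finally show ?thesis by simp
  qed
  define c where "c = Sup L"
  have Lne: "L \<noteq> {}" unfolding L_def using G00 by blast
  have Lbdd: "bdd_above L"
    unfolding bdd_above_def L_def using key[OF _ G00] by fastforce
  have c1: "a - s (vadd y (rsm (-1) x0)) \<le> c" if "(y,a) \<in> G" for y a
    unfolding c_def by (rule cSup_upper[OF _ Lbdd]) (use that L_def in blast)
  have c2: "c \<le> s (vadd z x0) - b" if "(z,b) \<in> G" for z b
    unfolding c_def by (rule cSup_least[OF Lne]) (use key that L_def in blast)
  define G' where "G' = {(vadd y (rsm t x0), a + t * c) | y a t. (y,a) \<in> G}"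
  have inG': "(vadd y (rsm t x0), a + t * c) \<in> G'" if "(y,a) \<in> G" for y a t
    unfolding G'_def using that by blast
  have sub: "G \<subseteq> G'"
  proof
    fix z assume "z \<in> G"
    then obtain y a where z: "z = (y,a)" "(y,a) \<in> G" by (cases z) auto
    have "(vadd y (rsm 0 x0), a + 0 * c) \<in> G'" by (rule inG'[OF z(2)])
    moreover have "vadd y (rsm 0 x0) = y" by (simp add: vadd_def rsm_def)
    ultimately show "z \<in> G'" using z by simp
  qed
  have x0G': "(x0, c) \<in> G'"
  proof -
    have "(vadd (\<lambda>j. 0) (rsm 1 x0), 0 + 1 * c) \<in> G'" by (rule inG'[OF G00])
    moreover have "vadd (\<lambda>j. 0) (rsm 1 x0) = x0" by (simp add: vadd_def rsm_def)
    ultimately show ?thesis by simp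
  qed
  have neq: "G' \<noteq> G" using x0G' x0(2) by blast
  have valid: "hb_valid V M s h G'"
    unfolding hb_valid_def
  proof (intro conjI allI impI ballI)
    fix x a b assume xa: "(x,a) \<in> G'" and xb: "(x,b) \<in> G'"
    obtain y1 a1 t1 where 1: "x = vadd y1 (rsm t1 x0)" "a = a1 + t1 * c" "(y1,a1) \<in> G"
      using xa unfolding G'_def by blast
    obtain y2 a2 t2 where 2: "x = vadd y2 (rsm t2 x0)" "b = a2 + t2 * c" "(y2,a2) \<in> G"
      using xb unfolding G'_def by blast
    have eq: "\<And>j. y1 j + of_real t1 * x0 j = y2 j + of_real t2 * x0 j"
      using 1(1) 2(1) unfolding vadd_def rsm_def by metis
    show "a = b"
    proof (cases "t1 = t2")
      case True
      then have "y1 = y2" using eq by (simp add: fun_eq_iff)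
      then show ?thesis using Gf 1 2 True by simp
    next
      case False
      have m: "(rsm (1 / (t2 - t1)) (vadd y1 (rsm (-1) y2)), (1 / (t2 - t1)) * (a1 + (-1) * a2)) \<in> G"
        by (intro Gsm Gadd 1(3) 2(3))
      have "rsm (1 / (t2 - t1)) (vadd y1 (rsm (-1) y2)) = x0"
      proof
        fix j
        have "y1 j - y2 j = of_real (t2 - t1) * x0 j" using eq[of j] by (simp add: algebra_simps)
        moreover have "of_real (t2 - t1) \<noteq> (0::complex)" using False by simp
        ultimately show "rsm (1 / (t2 - t1)) (vadd y1 (rsm (-1) y2)) j = x0 j"
          unfolding rsm_def vadd_def by (simp add: field_simps)
      qed
      then show ?thesis using m x0(2) by simp
    qed
  next
    fix x a assume "(x,a) \<in> G'"
    then obtain y a1 t where 1: "x = vadd y (rsm t x0)" "(y,a1) \<in> G" unfolding G'_def by blast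
    show "x \<in> V" unfolding 1 using GV[OF 1(2)] x0 by (intro Vadd Vsm)
  next
    fix x assume "x \<in> M"
    then show "(x, h x) \<in> G'" using GM sub by blast
  next
    fix x a y b assume xa: "(x,a) \<in> G'" and yb: "(y,b) \<in> G'"
    obtain y1 a1 t1 where 1: "x = vadd y1 (rsm t1 x0)" "a = a1 + t1 * c" "(y1,a1) \<in> G"
      using xa unfolding G'_def by blast
    obtain y2 a2 t2 where 2: "y = vadd y2 (rsm t2 x0)" "b = a2 + t2 * c" "(y2,a2) \<in> G"
      using yb unfolding G'_def by blast
    have "(vadd (vadd y1 y2) (rsm (t1 + t2) x0), (a1 + a2) + (t1 + t2) * c) \<in> G'"
      by (intro inG' Gadd 1(3) 2(3))
    moreover have "vadd (vadd y1 y2) (rsm (t1 + t2) x0) = vadd x y"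
      unfolding 1 2 by (simp add: vadd_def rsm_def fun_eq_iff algebra_simps)
    ultimately show "(vadd x y, a + b) \<in> G'" unfolding 1 2 by (simp add: algebra_simps)
  next
    fix x a r assume xa: "(x,a) \<in> G'"
    obtain y1 a1 t1 where 1: "x = vadd y1 (rsm t1 x0)" "a = a1 + t1 * c" "(y1,a1) \<in> G"
      using xa unfolding G'_def by blast
    have "(vadd (rsm r y1) (rsm (r * t1) x0), r * a1 + (r * t1) * c) \<in> G'"
      by (intro inG' Gsm 1(3))
    moreover have "vadd (rsm r y1) (rsm (r * t1) x0) = rsm r x"
      unfolding 1 by (simp add: vadd_def rsm_def fun_eq_iff algebra_simps)
    ultimately show "(rsm r x, r * a) \<in> G'" unfolding 1 by (simp add: algebra_simps)
  next
    fix x a assume xa: "(x,a) \<in> G'"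
    obtain y a1 t where 1: "x = vadd y (rsm t x0)" "a = a1 + t * c" "(y,a1) \<in> G"
      using xa unfolding G'_def by blast
    have yV: "y \<in> V" using GV[OF 1(3)] .
    show "a \<le> s x"
    proof (cases t "0::real" rule: linorder_cases)
      case equal
      then have "x = y" unfolding 1 by (simp add: vadd_def rsm_def)
      then show ?thesis using 1 equal Gs by simp
    next
      case greater
      have m: "(rsm (1/t) y, (1/t) * a1) \<in> G" by (rule Gsm[OF 1(3)])
      have "c \<le> s (vadd (rsm (1/t) y) x0) - (1/t) * a1" by (rule c2[OF m])
      then have "t * ((1/t) * a1 + c) \<le> t * s (vadd (rsm (1/t) y) x0)"
        using greater by (intro mult_left_mono) auto
      also have "t * s (vadd (rsm (1/t) y) x0) = s (rsm t (vadd (rsm (1/t) y) x0))"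
        using ssm[of "vadd (rsm (1/t) y) x0" t] greater yV x0 by (simp add: Vadd Vsm)
      also have "rsm t (vadd (rsm (1/t) y) x0) = x"
        unfolding 1 using greater by (simp add: vadd_def rsm_def fun_eq_iff field_simps)
      finally show ?thesis unfolding 1 using greater by (simp add: algebra_simps)
    next
      case less
      define r where "r = - t"
      have rpos: "r > 0" using less r_def by simp
      have m: "(rsm (1/r) y, (1/r) * a1) \<in> G" by (rule Gsm[OF 1(3)])
      have "(1/r) * a1 - s (vadd (rsm (1/r) y) (rsm (-1) x0)) \<le> c" by (rule c1[OF m])
      then have "r * ((1/r) * a1 - c) \<le> r * s (vadd (rsm (1/r) y) (rsm (-1) x0))"
        using rpos by (intro mult_left_mono) auto
      also have "r * s (vadd (rsm (1/r) y) (rsm (-1) x0)) = s (rsm r (vadd (rsm (1/r) y) (rsm (-1) x0)))"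
        using ssm[of "vadd (rsm (1/r) y) (rsm (-1) x0)" r] rpos yV x0 by (simp add: Vadd Vsm)
      also have "rsm r (vadd (rsm (1/r) y) (rsm (-1) x0)) = x"
        unfolding 1 r_def using less by (simp add: vadd_def rsm_def fun_eq_iff field_simps)
      finally show ?thesis unfolding 1 using rpos r_def by (simp add: algebra_simps)
    qed
  qed
  show ?thesis using valid sub neq by blast
qed


lemma hbD1: "hb_valid V M s h G \<Longrightarrow> (x,a) \<in> G \<Longrightarrow> (x,b) \<in> G \<Longrightarrow> a = b"
  unfolding hb_valid_def by blast
lemma hbD2: "hb_valid V M s h G \<Longrightarrow> (x,a) \<in> G \<Longrightarrow> x \<in> V"
  unfolding hb_valid_def by blast
lemma hbD3: "hb_valid V M s h G \<Longrightarrow> x \<in> M \<Longrightarrow> (x, h x) \<in> G"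
  unfolding hb_valid_def by blast
lemma hbD4: "hb_valid V M s h G \<Longrightarrow> (x,a) \<in> G \<Longrightarrow> (y,b) \<in> G \<Longrightarrow> (vadd x y, a + b) \<in> G"
  unfolding hb_valid_def by blast
lemma hbD5: "hb_valid V M s h G \<Longrightarrow> (x,a) \<in> G \<Longrightarrow> (rsm t x, t * a) \<in> G"
  unfolding hb_valid_def by blast
lemma hbD6: "hb_valid V M s h G \<Longrightarrow> (x,a) \<in> G \<Longrightarrow> a \<le> s x"
  unfolding hb_valid_def by blast

lemma hb_real:
  assumes Vadd: "\<And>x y. x \<in> V \<Longrightarrow> y \<in> V \<Longrightarrow> vadd x y \<in> V"
    and Vsm: "\<And>x t. x \<in> V \<Longrightarrow> rsm t x \<in> V"
    and sadd: "\<And>x y. x \<in> V \<Longrightarrow> y \<in> V \<Longrightarrow> s (vadd x y) \<le> s x + s y"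
    and ssm: "\<And>x t. x \<in> V \<Longrightarrow> s (rsm t x) = \<bar>t\<bar> * s x"
    and MV: "M \<subseteq> V" and M0: "(\<lambda>j. 0) \<in> M"
    and Madd: "\<And>x y. x \<in> M \<Longrightarrow> y \<in> M \<Longrightarrow> vadd x y \<in> M"
    and Msm: "\<And>x t. x \<in> M \<Longrightarrow> rsm t x \<in> M"
    and hadd: "\<And>x y. x \<in> M \<Longrightarrow> y \<in> M \<Longrightarrow> h (vadd x y) = h x + h y"
    and hsm: "\<And>x t. x \<in> M \<Longrightarrow> h (rsm t x) = t * h x"
    and hs: "\<And>x. x \<in> M \<Longrightarrow> h x \<le> s x"
  shows "\<exists>H. (\<forall>x\<in>V. \<forall>y\<in>V. H (vadd x y) = H x + H y) \<and> (\<forall>x\<in>V. \<forall>t. H (rsm t x) = t * H x)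
            \<and> (\<forall>x\<in>V. H x \<le> s x) \<and> (\<forall>x\<in>M. H x = h x)"
proof -
  have h0: "h (\<lambda>j. 0) = 0"
  proof -
    have "h (rsm 0 (\<lambda>j. 0)) = 0 * h (\<lambda>j. 0)" by (rule hsm[OF M0])
    moreover have "rsm 0 (\<lambda>j. 0) = (\<lambda>j. 0)" by (simp add: rsm_def)
    ultimately show ?thesis by simp
  qed
  define A where "A = {G. hb_valid V M s h G}"
  define G0 where "G0 = {(x, h x) | x. x \<in> M}"
  have G0v: "G0 \<in> A" unfolding A_def mem_Collect_eq hb_valid_def
  proof (intro conjI allI impI ballI)
    fix x a b assume "(x,a) \<in> G0" "(x,b) \<in> G0"
    then show "a = b" unfolding G0_def by blast
  next
    fix x a assume "(x,a) \<in> G0"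
    then show "x \<in> V" unfolding G0_def using MV by blast
  next
    fix x assume "x \<in> M" then show "(x, h x) \<in> G0" unfolding G0_def by blast
  next
    fix x a y b assume "(x,a) \<in> G0" "(y,b) \<in> G0"
    then have "x \<in> M" "y \<in> M" "a = h x" "b = h y" unfolding G0_def by blast+
    then show "(vadd x y, a + b) \<in> G0" unfolding G0_def using Madd hadd by auto
  next
    fix x a t assume "(x,a) \<in> G0"
    then have "x \<in> M" "a = h x" unfolding G0_def by blast+
    then show "(rsm t x, t * a) \<in> G0" unfolding G0_def using Msm hsm by auto
  next
    fix x a assume "(x,a) \<in> G0"
    then have "x \<in> M" "a = h x" unfolding G0_def by blast+
    then show "a \<le> s x" using hs by simp
  qed
  have "\<forall>C\<in>chains A. \<exists>U\<in>A. \<forall>X\<in>C. X \<subseteq> U"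
  proof
    fix C assume C: "C \<in> chains A"
    then have CA: "C \<subseteq> A" and ch: "\<And>X Y. X \<in> C \<Longrightarrow> Y \<in> C \<Longrightarrow> X \<subseteq> Y \<or> Y \<subseteq> X"
      unfolding chains_def chain_subset_def by auto
    show "\<exists>U\<in>A. \<forall>X\<in>C. X \<subseteq> U"
    proof (cases "C = {}")
      case True
      then show ?thesis using G0v by blast
    next
      case False
      then obtain C0 where C0: "C0 \<in> C" by blast
      have vC: "\<And>X. X \<in> C \<Longrightarrow> hb_valid V M s h X" using CA unfolding A_def by blast
      have two: "\<exists>Z\<in>C. X \<subseteq> Z \<and> Y \<subseteq> Z" if "X \<in> C" "Y \<in> C" for X Y
        using ch[OF that] that by blast
      have "hb_valid V M s h (\<Union>C)"
        unfolding hb_valid_def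
      proof (intro conjI allI impI ballI)
        fix x a b assume "(x,a) \<in> \<Union>C" "(x,b) \<in> \<Union>C"
        then obtain X Y where "X \<in> C" "Y \<in> C" "(x,a) \<in> X" "(x,b) \<in> Y" by blast
        then obtain Z where "Z \<in> C" "(x,a) \<in> Z" "(x,b) \<in> Z" using two by blast
        then show "a = b" using hbD1[OF vC] by blast
      next
        fix x a assume "(x,a) \<in> \<Union>C"
        then obtain X where "X \<in> C" "(x,a) \<in> X" by blast
        then show "x \<in> V" using hbD2[OF vC] by blast
      next
        fix x assume "x \<in> M"
        then have "(x, h x) \<in> C0" using hbD3[OF vC[OF C0]] by blast
        then show "(x, h x) \<in> \<Union>C" using C0 by blast
      next
        fix x a y b assume "(x,a) \<in> \<Union>C" "(y,b) \<in> \<Union>C"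
        then obtain X Y where "X \<in> C" "Y \<in> C" "(x,a) \<in> X" "(y,b) \<in> Y" by blast
        then obtain Z where Z: "Z \<in> C" "(x,a) \<in> Z" "(y,b) \<in> Z" using two by blast
        then have "(vadd x y, a + b) \<in> Z" using hbD4[OF vC[OF Z(1)]] by blast
        then show "(vadd x y, a + b) \<in> \<Union>C" using Z by blast
      next
        fix x a t assume "(x,a) \<in> \<Union>C"
        then obtain X where X: "X \<in> C" "(x,a) \<in> X" by blast
        then have "(rsm t x, t * a) \<in> X" using hbD5[OF vC[OF X(1)]] by blast
        then show "(rsm t x, t * a) \<in> \<Union>C" using X by blast
      next
        fix x a assume "(x,a) \<in> \<Union>C"
        then obtain X where "X \<in> C" "(x,a) \<in> X" by blast
        then show "a \<le> s x" using hbD6[OF vC] by blast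
      qed
      then show ?thesis unfolding A_def by blast
    qed
  qed
  then have "\<exists>M\<in>A. \<forall>X\<in>A. M \<subseteq> X \<longrightarrow> X = M" by (rule Zorn_Lemma2)
  then obtain Gm where Gm: "Gm \<in> A" and max0: "\<forall>X\<in>A. Gm \<subseteq> X \<longrightarrow> X = Gm"
    by (elim bexE)
  have max: "\<And>G. G \<in> A \<Longrightarrow> Gm \<subseteq> G \<Longrightarrow> G = Gm" using max0 by blast
  have vGm: "hb_valid V M s h Gm" using Gm unfolding A_def by blast
  have dom: "\<exists>a. (x,a) \<in> Gm" if xV: "x \<in> V" for x
  proof (rule ccontr)
    assume "\<not> (\<exists>a. (x,a) \<in> Gm)"
    then have nx: "\<forall>a. (x,a) \<notin> Gm" by blast
    obtain G' where "hb_valid V M s h G'" "Gm \<subseteq> G'" "G' \<noteq> Gm"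
      using hb_extend[OF Vadd Vsm sadd ssm vGm M0 h0 xV nx] by blast
    then show False using max[of G'] unfolding A_def by blast
  qed
  define H where "H x = (SOME a. (x,a) \<in> Gm)" for x
  have HG: "(x, H x) \<in> Gm" if "x \<in> V" for x
    unfolding H_def using dom[OF that] by (rule someI_ex)
  have uniq: "\<And>x a b. (x,a) \<in> Gm \<Longrightarrow> (x,b) \<in> Gm \<Longrightarrow> a = b"
    and Gadd: "\<And>x a y b. (x,a) \<in> Gm \<Longrightarrow> (y,b) \<in> Gm \<Longrightarrow> (vadd x y, a + b) \<in> Gm"
    and Gsm: "\<And>x a t. (x,a) \<in> Gm \<Longrightarrow> (rsm t x, t * a) \<in> Gm"
    and Gs: "\<And>x a. (x,a) \<in> Gm \<Longrightarrow> a \<le> s x"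
    and GM: "\<And>x. x \<in> M \<Longrightarrow> (x, h x) \<in> Gm"
    using hbD1[OF vGm] hbD4[OF vGm] hbD5[OF vGm] hbD6[OF vGm] hbD3[OF vGm] by blast+
  show ?thesis
  proof (intro exI[of _ H] conjI ballI allI)
    fix x y assume "x \<in> V" "y \<in> V"
    then have "(vadd x y, H (vadd x y)) \<in> Gm" "(vadd x y, H x + H y) \<in> Gm"
      by (auto intro: HG Vadd Gadd)
    then show "H (vadd x y) = H x + H y" by (rule uniq)
  next
    fix x t assume "x \<in> V"
    then have "(rsm t x, H (rsm t x)) \<in> Gm" "(rsm t x, t * H x) \<in> Gm"
      by (auto intro: HG Vsm Gsm)
    then show "H (rsm t x) = t * H x" by (rule uniq)
  next
    fix x assume "x \<in> V"
    then show "H x \<le> s x" by (intro Gs HG)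
  next
    fix x assume "x \<in> M"
    then have "(x, H x) \<in> Gm" "(x, h x) \<in> Gm" using MV by (auto intro: HG GM)
    then show "H x = h x" by (rule uniq)
  qed
qed


lemma hb_complex:
  fixes V M :: "cseq set" and s :: "cseq \<Rightarrow> real" and g :: "cseq \<Rightarrow> complex"
  assumes V0: "(\<lambda>j. 0) \<in> V" and Vadd: "\<And>x y. x \<in> V \<Longrightarrow> y \<in> V \<Longrightarrow> (\<lambda>j. x j + y j) \<in> V"
    and Vsm: "\<And>x c. x \<in> V \<Longrightarrow> (\<lambda>j. c * x j) \<in> V"
    and sadd: "\<And>x y. x \<in> V \<Longrightarrow> y \<in> V \<Longrightarrow> s (\<lambda>j. x j + y j) \<le> s x + s y"
    and ssm: "\<And>x c. x \<in> V \<Longrightarrow> s (\<lambda>j. c * x j) = norm c * s x"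
    and snn: "\<And>x. x \<in> V \<Longrightarrow> 0 \<le> s x"
    and MV: "M \<subseteq> V" and M0: "(\<lambda>j. 0) \<in> M"
    and Madd: "\<And>x y. x \<in> M \<Longrightarrow> y \<in> M \<Longrightarrow> (\<lambda>j. x j + y j) \<in> M"
    and Msm: "\<And>x c. x \<in> M \<Longrightarrow> (\<lambda>j. c * x j) \<in> M"
    and gadd: "\<And>x y. x \<in> M \<Longrightarrow> y \<in> M \<Longrightarrow> g (\<lambda>j. x j + y j) = g x + g y"
    and gsm: "\<And>x c. x \<in> M \<Longrightarrow> g (\<lambda>j. c * x j) = c * g x"
    and gs: "\<And>x. x \<in> M \<Longrightarrow> norm (g x) \<le> s x"
  shows "\<exists>F. (\<forall>x\<in>V. \<forall>y\<in>V. F (\<lambda>j. x j + y j) = F x + F y) \<and> (\<forall>x\<in>V. \<forall>c. F (\<lambda>j. c * x j) = c * F x)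
            \<and> (\<forall>x\<in>V. norm (F x) \<le> s x) \<and> (\<forall>x\<in>M. F x = g x)"
proof -
  define h where "h x = Re (g x)" for x
  have "\<exists>H. (\<forall>x\<in>V. \<forall>y\<in>V. H (vadd x y) = H x + H y) \<and> (\<forall>x\<in>V. \<forall>t. H (rsm t x) = t * H x)
            \<and> (\<forall>x\<in>V. H x \<le> s x) \<and> (\<forall>x\<in>M. H x = h x)"
  proof (rule hb_real)
    show "\<And>x y. x \<in> V \<Longrightarrow> y \<in> V \<Longrightarrow> vadd x y \<in> V" unfolding vadd_def by (rule Vadd)
    show "\<And>x t. x \<in> V \<Longrightarrow> rsm t x \<in> V" unfolding rsm_def by (rule Vsm)
    show "\<And>x y. x \<in> V \<Longrightarrow> y \<in> V \<Longrightarrow> s (vadd x y) \<le> s x + s y" unfolding vadd_def by (rule sadd)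
    show "\<And>x t. x \<in> V \<Longrightarrow> s (rsm t x) = \<bar>t\<bar> * s x" unfolding rsm_def using ssm by simp
    show "M \<subseteq> V" by (rule MV)
    show "(\<lambda>j. 0) \<in> M" by (rule M0)
    show "\<And>x y. x \<in> M \<Longrightarrow> y \<in> M \<Longrightarrow> vadd x y \<in> M" unfolding vadd_def by (rule Madd)
    show "\<And>x t. x \<in> M \<Longrightarrow> rsm t x \<in> M" unfolding rsm_def by (rule Msm)
    show "\<And>x y. x \<in> M \<Longrightarrow> y \<in> M \<Longrightarrow> h (vadd x y) = h x + h y" unfolding vadd_def h_def using gadd by simp
    show "\<And>x t. x \<in> M \<Longrightarrow> h (rsm t x) = t * h x" unfolding rsm_def h_def using gsm by simp
    show "h x \<le> s x" if "x \<in> M" for x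
    proof -
      have "Re (g x) \<le> norm (g x)" by (rule complex_Re_le_cmod)
      then show ?thesis unfolding h_def using gs[OF that] by linarith
    qed
  qed
  then obtain H where Hadd: "\<And>x y. x \<in> V \<Longrightarrow> y \<in> V \<Longrightarrow> H (vadd x y) = H x + H y"
    and Hsm: "\<And>x t. x \<in> V \<Longrightarrow> H (rsm t x) = t * H x"
    and Hs: "\<And>x. x \<in> V \<Longrightarrow> H x \<le> s x" and HM: "\<And>x. x \<in> M \<Longrightarrow> H x = h x"
    by blast
  have Hc: "H (\<lambda>j. c * x j) = Re c * H x + Im c * H (\<lambda>j. \<i> * x j)" if x: "x \<in> V" for x c
  proof -
    have ix: "(\<lambda>j. \<i> * x j) \<in> V" using x by (rule Vsm)
    have e: "(\<lambda>j. c * x j) = vadd (rsm (Re c) x) (rsm (Im c) (\<lambda>j. \<i> * x j))"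
    proof
      fix j
      have "c = complex_of_real (Re c) + complex_of_real (Im c) * \<i>" by (simp add: complex_eq_iff)
      then have "c * x j = (complex_of_real (Re c) + complex_of_real (Im c) * \<i>) * x j" by simp
      then show "c * x j = vadd (rsm (Re c) x) (rsm (Im c) (\<lambda>j. \<i> * x j)) j"
        unfolding vadd_def rsm_def by (simp add: algebra_simps)
    qed
    have "H (vadd (rsm (Re c) x) (rsm (Im c) (\<lambda>j. \<i> * x j))) = H (rsm (Re c) x) + H (rsm (Im c) (\<lambda>j. \<i> * x j))"
      using x ix by (intro Hadd) (simp_all add: rsm_def Vsm)
    also have "\<dots> = Re c * H x + Im c * H (\<lambda>j. \<i> * x j)" using x ix by (simp add: Hsm)
    finally show ?thesis using e by simp
  qed
  define F where "F x = complex_of_real (H x) - \<i> * complex_of_real (H (\<lambda>j. \<i> * x j))" for x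
  have ReF: "Re (F x) = H x" for x unfolding F_def by simp
  have Fadd: "F (\<lambda>j. x j + y j) = F x + F y" if "x \<in> V" "y \<in> V" for x y
  proof -
    have 1: "H (\<lambda>j. x j + y j) = H x + H y" using Hadd[OF that] unfolding vadd_def .
    have e: "(\<lambda>j. \<i> * (x j + y j)) = vadd (\<lambda>j. \<i> * x j) (\<lambda>j. \<i> * y j)"
      by (simp add: vadd_def fun_eq_iff distrib_left)
    have 2: "H (\<lambda>j. \<i> * (x j + y j)) = H (\<lambda>j. \<i> * x j) + H (\<lambda>j. \<i> * y j)"
      unfolding e using that by (intro Hadd Vsm)
    show ?thesis unfolding F_def 1 2 by (simp add: algebra_simps)
  qed
  have Fsm: "F (\<lambda>j. c * x j) = c * F x" if x: "x \<in> V" for x c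
  proof -
    have "(\<lambda>j. \<i> * (c * x j)) = (\<lambda>j. (\<i> * c) * x j)" by (simp add: mult.assoc)
    then have "H (\<lambda>j. \<i> * (c * x j)) = Re (\<i> * c) * H x + Im (\<i> * c) * H (\<lambda>j. \<i> * x j)"
      using Hc[OF x, of "\<i> * c"] by simp
    then have 2: "H (\<lambda>j. \<i> * (c * x j)) = - Im c * H x + Re c * H (\<lambda>j. \<i> * x j)" by simp
    have 1: "H (\<lambda>j. c * x j) = Re c * H x + Im c * H (\<lambda>j. \<i> * x j)" by (rule Hc[OF x])
    show ?thesis unfolding F_def 1 2 by (simp add: complex_eq_iff algebra_simps)
  qed
  have Fs: "norm (F x) \<le> s x" if x: "x \<in> V" for x
  proof (cases "F x = 0")
    case True
    then show ?thesis using snn[OF x] by simp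
  next
    case False
    define w where "w = cnj (F x) / complex_of_real (norm (F x))"
    have nw: "norm w = 1" unfolding w_def using False by (simp add: norm_divide)
    have "w * F x = (F x * cnj (F x)) / complex_of_real (norm (F x))"
      unfolding w_def by (simp add: mult.commute)
    also have "\<dots> = complex_of_real (norm (F x))^2 / complex_of_real (norm (F x))"
      using complex_norm_square[of "F x"] by simp
    also have "\<dots> = complex_of_real (norm (F x))" using False by (simp add: power2_eq_square)
    finally have wz: "w * F x = complex_of_real (norm (F x))" .
    have "norm (F x) = Re (F (\<lambda>j. w * x j))" using Fsm[OF x, of w] wz by simp
    also have "\<dots> = H (\<lambda>j. w * x j)" by (rule ReF)
    also have "\<dots> \<le> s (\<lambda>j. w * x j)" using x by (intro Hs Vsm)
    also have "\<dots> = s x" using ssm[OF x, of w] nw by simp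
    finally show ?thesis .
  qed
  have FM: "F x = g x" if x: "x \<in> M" for x
  proof -
    have ix: "(\<lambda>j. \<i> * x j) \<in> M" using x by (rule Msm)
    have "H x = Re (g x)" using HM[OF x] h_def by simp
    moreover have "H (\<lambda>j. \<i> * x j) = - Im (g x)" using HM[OF ix] h_def gsm[OF x, of \<i>] by simp
    ultimately show ?thesis unfolding F_def by (simp add: complex_eq_iff)
  qed
  show ?thesis using Fadd Fsm Fs FM by blast
qed


lemma pow_small: "(e::real) > 0 \<Longrightarrow> \<exists>K. (1/2::real)^(Suc K) < e"
proof -
  assume e: "e > 0"
  obtain n where n: "(1/2::real)^n < e" using real_arch_pow_inv[OF e, of "1/2"] by auto
  have "(1/2::real)^(Suc n) \<le> (1/2)^n" by simp
  then show ?thesis using n by (intro exI[of _ n]) linarith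
qed

context fk
begin

lemma SN_smul: "x \<in> X \<Longrightarrow> SN K (\<lambda>j. c * x j) = norm c * SN K x"
  by (simp add: P_smul sum_distrib_left)

lemma SN_sym: "x \<in> X \<Longrightarrow> y \<in> X \<Longrightarrow> SN K (\<lambda>j. x j - y j) = SN K (\<lambda>j. y j - x j)"
  by (rule sum.cong[OF refl]) (rule P_sym)

lemma SN_add: "x \<in> X \<Longrightarrow> y \<in> X \<Longrightarrow> SN K (\<lambda>j. x j + y j) \<le> SN K x + SN K y"
proof -
  assume a: "x \<in> X" "y \<in> X"
  have "SN K (\<lambda>j. x j + y j) \<le> (\<Sum>k\<le>K. P k x + P k y)"
    by (rule sum_mono) (rule P_add[OF a])
  then show ?thesis by (simp add: sum.distrib)
qed

lemma SN_zero_eq: "x \<in> X \<Longrightarrow> y \<in> X \<Longrightarrow> (\<forall>k. P k (\<lambda>j. x j - y j) = 0) \<Longrightarrow> x = y"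
proof -
  assume a: "x \<in> X" "y \<in> X" and z: "\<forall>k. P k (\<lambda>j. x j - y j) = 0"
  show "x = y"
  proof
    fix j
    obtain N C where NC: "\<forall>x\<in>X. norm (x j) \<le> C * SN N x" using coord by blast
    have "norm ((\<lambda>j. x j - y j) j) \<le> C * SN N (\<lambda>j. x j - y j)" by (rule NC[rule_format, OF diffX[OF a]])
    then have "norm (x j - y j) \<le> 0" using z by simp
    then show "x j = y j" by simp
  qed
qed

lemma min_subadd: "c \<le> b1 + b2 \<Longrightarrow> 0 \<le> b1 \<Longrightarrow> 0 \<le> b2 \<Longrightarrow> 0 \<le> (a::real) \<Longrightarrow>
   min a c \<le> min a b1 + min a b2"
  unfolding min_def by auto

definition dk :: "nat \<Rightarrow> cseq \<Rightarrow> cseq \<Rightarrow> real" where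
  "dk k x y = min ((1/2)^k) (P k (\<lambda>j. x j - y j))"

definition dY :: "cseq set \<Rightarrow> cseq \<Rightarrow> cseq \<Rightarrow> real" where
  "dY Y x y = (if x \<in> Y \<and> y \<in> Y then (SUP k. dk k x y) else 0)"

lemma dk_le1: "dk k x y \<le> 1"
proof -
  have "(1/2::real)^k \<le> 1" by (rule power_le_one) auto
  then show ?thesis unfolding dk_def by linarith
qed

lemma dk_bdd: "bdd_above (range (\<lambda>k. dk k x y))"
  using dk_le1 by (intro bdd_aboveI[of _ 1]) auto

lemma dk_nonneg: "x \<in> X \<Longrightarrow> y \<in> X \<Longrightarrow> 0 \<le> dk k x y"
  unfolding dk_def using P_nonneg[OF diffX] by simp

lemma dk_le_dY: "x \<in> Y \<Longrightarrow> y \<in> Y \<Longrightarrow> dk k x y \<le> dY Y x y"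
  unfolding dY_def using cSUP_upper[OF UNIV_I dk_bdd] by simp

lemma dY_le: "x \<in> Y \<Longrightarrow> y \<in> Y \<Longrightarrow> (\<And>k. dk k x y \<le> b) \<Longrightarrow> dY Y x y \<le> b"
  unfolding dY_def by (simp add: cSUP_least)

lemma dY_D1:
  assumes Y: "Y \<subseteq> X" "x \<in> Y" "y \<in> Y" and lt: "dY Y x y < min ((1/2)^k) e"
  shows "P k (\<lambda>j. x j - y j) < e"
proof -
  have "dk k x y < min ((1/2)^k) e" using dk_le_dY[OF Y(2,3), of k] lt by linarith
  then show ?thesis unfolding dk_def by linarith
qed

lemma dY_D2:
  assumes Y: "Y \<subseteq> X" "x \<in> Y" "y \<in> Y"
  shows "dY Y x y \<le> max ((1/2)^(Suc K)) (SN K (\<lambda>j. x j - y j))"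
proof (rule dY_le[OF Y(2,3)])
  fix k
  have xy: "(\<lambda>j. x j - y j) \<in> X" using Y by (intro diffX) auto
  show "dk k x y \<le> max ((1/2)^(Suc K)) (SN K (\<lambda>j. x j - y j))"
  proof (cases "k \<le> K")
    case True
    then have "P k (\<lambda>j. x j - y j) \<le> SN K (\<lambda>j. x j - y j)" by (rule P_le_SN[OF xy])
    then show ?thesis unfolding dk_def by linarith
  next
    case False
    then have "(1/2::real)^k \<le> (1/2)^(Suc K)" by (intro power_decreasing) auto
    then show ?thesis unfolding dk_def by linarith
  qed
qed

lemma dY_metric: "Y \<subseteq> X \<Longrightarrow> Metric_space Y (dY Y)"
proof
  assume Y: "Y \<subseteq> X"
  show "0 \<le> dY Y x y" for x y
  proof (cases "x \<in> Y \<and> y \<in> Y")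
    case True
    then have "0 \<le> dk 0 x y" using Y by (intro dk_nonneg) auto
    also have "\<dots> \<le> dY Y x y" using True by (intro dk_le_dY) auto
    finally show ?thesis .
  next
    case False then show ?thesis unfolding dY_def by auto
  qed
  show "dY Y x y = dY Y y x" for x y
  proof (cases "x \<in> Y \<and> y \<in> Y")
    case True
    then have xX: "x \<in> X" and yX: "y \<in> X" using Y by auto
    have "\<And>k. dk k x y = dk k y x" unfolding dk_def using P_sym[OF xX yX] by simp
    then show ?thesis unfolding dY_def by simp
  next
    case False then show ?thesis unfolding dY_def by auto
  qed
  show "(dY Y x y = 0) = (x = y)" if "x \<in> Y" "y \<in> Y" for x y
  proof
    assume d0: "dY Y x y = 0"
    have "\<forall>k. P k (\<lambda>j. x j - y j) = 0"
    proof
      fix k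
      have "dk k x y \<le> 0" using dk_le_dY[OF that, of k] d0 by simp
      moreover have "(1/2::real)^k > 0" by simp
      moreover have "0 \<le> P k (\<lambda>j. x j - y j)" using Y that by (intro P_nonneg diffX) auto
      ultimately show "P k (\<lambda>j. x j - y j) = 0" unfolding dk_def by linarith
    qed
    then show "x = y" using SN_zero_eq Y that by blast
  next
    assume "x = y"
    then show "dY Y x y = 0" unfolding dY_def dk_def using that by (simp add: P_zero)
  qed
  show "dY Y x z \<le> dY Y x y + dY Y y z" if "x \<in> Y" "y \<in> Y" "z \<in> Y" for x y z
  proof (rule dY_le)
    show "x \<in> Y" "z \<in> Y" using that by auto
    fix k
    have xyz: "x \<in> X" "y \<in> X" "z \<in> X" using that Y by auto
    have "P k (\<lambda>j. x j - z j) \<le> P k (\<lambda>j. x j - y j) + P k (\<lambda>j. y j - z j)" by (rule P_tri[OF xyz])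
    moreover have "0 \<le> P k (\<lambda>j. x j - y j)" "0 \<le> P k (\<lambda>j. y j - z j)"
      using xyz by (intro P_nonneg diffX; simp)+
    moreover have "(0::real) \<le> (1/2)^k" by simp
    ultimately have "dk k x z \<le> dk k x y + dk k y z" unfolding dk_def by (intro min_subadd)
    also have "\<dots> \<le> dY Y x y + dY Y y z" using that by (intro add_mono dk_le_dY) auto
    finally show "dk k x z \<le> dY Y x y + dY Y y z" .
  qed
qed

end

context fk
begin

lemma BS:
  fixes Y :: "cseq set" and \<phi> :: "'i \<Rightarrow> cseq \<Rightarrow> real"
  assumes YX: "Y \<subseteq> X" and Y0: "(\<lambda>j. 0) \<in> Y"
    and Yadd: "\<And>x y. x \<in> Y \<Longrightarrow> y \<in> Y \<Longrightarrow> (\<lambda>j. x j + y j) \<in> Y"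
    and Ysm: "\<And>x c. x \<in> Y \<Longrightarrow> (\<lambda>j. c * x j) \<in> Y"
    and Ycl: "\<And>s x. (\<And>n. s n \<in> Y) \<Longrightarrow> x \<in> X \<Longrightarrow> (\<And>k. (\<lambda>n. P k (\<lambda>j. s n j - x j)) \<longlonglongrightarrow> 0) \<Longrightarrow> x \<in> Y"
    and padd: "\<And>i x y. x \<in> Y \<Longrightarrow> y \<in> Y \<Longrightarrow> \<phi> i (\<lambda>j. x j + y j) \<le> \<phi> i x + \<phi> i y"
    and psm: "\<And>i x c. x \<in> Y \<Longrightarrow> \<phi> i (\<lambda>j. c * x j) = norm c * \<phi> i x"
    and pc: "\<And>i. \<exists>N C. \<forall>x\<in>Y. \<phi> i x \<le> C * SN N x"
    and bd: "\<And>x. x \<in> Y \<Longrightarrow> \<exists>B. \<forall>i. \<phi> i x \<le> B"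
  shows "\<exists>N C. \<forall>x\<in>Y. \<forall>i. \<phi> i x \<le> C * SN N x"
proof -
  interpret Mt: Metric_space Y "dY Y" by (rule dY_metric[OF YX])
  have Yneg: "(\<lambda>j. - x j) \<in> Y" if "x \<in> Y" for x using Ysm[OF that, of "-1"] by simp
  have Ydiff: "(\<lambda>j. x j - y j) \<in> Y" if "x \<in> Y" "y \<in> Y" for x y
    using Yadd[OF that(1) Yneg[OF that(2)]] by simp
  have pneg: "\<phi> i (\<lambda>j. - x j) = \<phi> i x" if "x \<in> Y" for i x using psm[OF that, of i "-1"] by simp
  have compl: "Mt.mcomplete"
    unfolding Mt.mcomplete_def
  proof (intro allI impI)
    fix \<sigma> assume C: "Mt.MCauchy \<sigma>"
    then have sY: "\<And>n. \<sigma> n \<in> Y" and cau: "\<And>\<epsilon>. \<epsilon> > 0 \<Longrightarrow> \<exists>N. \<forall>n n'. N \<le> n \<longrightarrow> N \<le> n' \<longrightarrow> dY Y (\<sigma> n) (\<sigma> n') < \<epsilon>"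
      unfolding Mt.MCauchy_def by auto
    have "\<forall>k. \<forall>e>0. \<exists>M. \<forall>m\<ge>M. \<forall>n\<ge>M. P k (\<lambda>j. \<sigma> m j - \<sigma> n j) < e"
    proof (intro allI impI)
      fix k and e :: real assume e: "e > 0"
      obtain N where N: "\<forall>n n'. N \<le> n \<longrightarrow> N \<le> n' \<longrightarrow> dY Y (\<sigma> n) (\<sigma> n') < min ((1/2)^k) e"
        using cau[of "min ((1/2)^k) e"] e by auto
      show "\<exists>M. \<forall>m\<ge>M. \<forall>n\<ge>M. P k (\<lambda>j. \<sigma> m j - \<sigma> n j) < e"
        using N dY_D1[OF YX sY sY] by blast
    qed
    then obtain x where xX: "x \<in> X" and lim: "\<And>k. (\<lambda>n. P k (\<lambda>j. \<sigma> n j - x j)) \<longlonglongrightarrow> 0"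
      using complete[of \<sigma>] sY YX by blast
    have xY: "x \<in> Y" by (rule Ycl[OF sY xX lim])
    have "\<forall>\<epsilon>>0. eventually (\<lambda>n. \<sigma> n \<in> Y \<and> dY Y (\<sigma> n) x < \<epsilon>) sequentially"
    proof (intro allI impI)
      fix \<epsilon> :: real assume e: "\<epsilon> > 0"
      obtain K where K: "(1/2::real)^(Suc K) < \<epsilon>" using pow_small[OF e] by blast
      have "(\<lambda>n. SN K (\<lambda>j. \<sigma> n j - x j)) \<longlonglongrightarrow> 0" by (rule SN_tendsto0[OF lim])
      then have "eventually (\<lambda>n. SN K (\<lambda>j. \<sigma> n j - x j) < \<epsilon>) sequentially"
        using e by (rule order_tendstoD(2))
      then show "eventually (\<lambda>n. \<sigma> n \<in> Y \<and> dY Y (\<sigma> n) x < \<epsilon>) sequentially"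
      proof (rule eventually_mono)
        fix n assume "SN K (\<lambda>j. \<sigma> n j - x j) < \<epsilon>"
        moreover have "dY Y (\<sigma> n) x \<le> max ((1/2)^(Suc K)) (SN K (\<lambda>j. \<sigma> n j - x j))"
          by (rule dY_D2[OF YX sY xY])
        ultimately show "\<sigma> n \<in> Y \<and> dY Y (\<sigma> n) x < \<epsilon>" using K sY by auto
      qed
    qed
    then show "\<exists>x. limitin Mt.mtopology \<sigma> x sequentially"
      using xY by (auto simp: Mt.limitin_metric)
  qed
  define E where "E m = {x\<in>Y. \<forall>i. \<phi> i x \<le> real m}" for m :: nat
  have Ecl: "closedin Mt.mtopology (E m)" for m
    unfolding Mt.metric_closedin_iff_sequentially_closed
  proof (intro conjI allI impI)
    show "E m \<subseteq> Y" unfolding E_def by blast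
    fix \<sigma> l assume a: "range \<sigma> \<subseteq> E m \<and> limitin Mt.mtopology \<sigma> l sequentially"
    then have sE: "\<And>n. \<sigma> n \<in> E m" by auto
    then have sY: "\<And>n. \<sigma> n \<in> Y" unfolding E_def by blast
    have lY: "l \<in> Y" and ev: "\<And>\<epsilon>. \<epsilon> > 0 \<Longrightarrow> eventually (\<lambda>n. \<sigma> n \<in> Y \<and> dY Y (\<sigma> n) l < \<epsilon>) sequentially"
      using a by (auto simp: Mt.limitin_metric)
    have Pl: "(\<lambda>n. P k (\<lambda>j. l j - \<sigma> n j)) \<longlonglongrightarrow> 0" for k
    proof (rule order_tendstoI)
      fix a :: real assume "a < 0"
      then show "eventually (\<lambda>n. a < P k (\<lambda>j. l j - \<sigma> n j)) sequentially"
        using P_nonneg[OF diffX] lY sY YX by (intro always_eventually) (auto simp: subset_iff less_le_trans)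
    next
      fix e :: real assume e: "e > 0"
      have "eventually (\<lambda>n. \<sigma> n \<in> Y \<and> dY Y (\<sigma> n) l < min ((1/2)^k) e) sequentially"
        using e by (intro ev) simp
      then show "eventually (\<lambda>n. P k (\<lambda>j. l j - \<sigma> n j) < e) sequentially"
      proof (rule eventually_mono)
        fix n assume "\<sigma> n \<in> Y \<and> dY Y (\<sigma> n) l < min ((1/2)^k) e"
        then have "P k (\<lambda>j. \<sigma> n j - l j) < e" using dY_D1[OF YX sY lY] by blast
        moreover have "l \<in> X" "\<sigma> n \<in> X" using lY sY YX by auto
        ultimately show "P k (\<lambda>j. l j - \<sigma> n j) < e" using P_sym[of l "\<sigma> n" k] by simp
      qed
    qed
    have "\<forall>i. \<phi> i l \<le> real m"
    proof
      fix i
      obtain N C where NC: "\<forall>x\<in>Y. \<phi> i x \<le> C * SN N x" using pc by blast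
      have le: "\<phi> i l \<le> real m + C * SN N (\<lambda>j. l j - \<sigma> n j)" for n
      proof -
        have "l = (\<lambda>j. \<sigma> n j + (\<lambda>j. l j - \<sigma> n j) j)" by simp
        then have "\<phi> i l = \<phi> i (\<lambda>j. \<sigma> n j + (\<lambda>j. l j - \<sigma> n j) j)" by simp
        also have "\<dots> \<le> \<phi> i (\<sigma> n) + \<phi> i (\<lambda>j. l j - \<sigma> n j)"
          by (rule padd[OF sY Ydiff[OF lY sY]])
        also have "\<dots> \<le> real m + C * SN N (\<lambda>j. l j - \<sigma> n j)"
          using sE[of n] NC Ydiff[OF lY sY] unfolding E_def by (intro add_mono) auto
        finally show ?thesis .
      qed
      have "(\<lambda>n. real m + C * SN N (\<lambda>j. l j - \<sigma> n j)) \<longlonglongrightarrow> real m + C * 0"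
        by (intro tendsto_add tendsto_const tendsto_mult SN_tendsto0 Pl)
      then show "\<phi> i l \<le> real m"
        using le by (intro tendsto_le[OF _ _ tendsto_const, of sequentially]) auto
    qed
    then show "l \<in> E m" unfolding E_def using lY by blast
  qed
  have "\<exists>m. Mt.mtopology interior_of (E m) \<noteq> {}"
  proof (rule ccontr)
    assume "\<not> (\<exists>m. Mt.mtopology interior_of (E m) \<noteq> {})"
    then have empt: "\<And>m. Mt.mtopology interior_of (E m) = {}" by blast
    have "Mt.mtopology interior_of \<Union>(range E) = {}"
      by (rule Mt.metric_Baire_category_alt[OF compl]) (use Ecl empt in auto)
    moreover have "\<Union>(range E) = Y"
    proof
      show "\<Union>(range E) \<subseteq> Y" unfolding E_def by blast
      show "Y \<subseteq> \<Union>(range E)"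
      proof
        fix x assume x: "x \<in> Y"
        obtain B where B: "\<forall>i. \<phi> i x \<le> B" using bd[OF x] by blast
        obtain m where "B \<le> real m" using real_arch_simple by blast
        then have "x \<in> E m" unfolding E_def using B x by (auto intro: order_trans)
        then show "x \<in> \<Union>(range E)" by blast
      qed
    qed
    ultimately have "Mt.mtopology interior_of Y = {}" by simp
    moreover have "Mt.mtopology interior_of Y = Y"
      using interior_of_topspace[of Mt.mtopology] by (simp only: Mt.topspace_mtopology)
    ultimately show False using Y0 by simp
  qed
  then obtain m x0 where x0: "x0 \<in> Mt.mtopology interior_of (E m)" by blast
  have "openin Mt.mtopology (Mt.mtopology interior_of (E m))" by (rule openin_interior_of)
  then have "\<forall>x. x \<in> Mt.mtopology interior_of (E m) \<longrightarrow> (\<exists>r>0. Mt.mball x r \<subseteq> Mt.mtopology interior_of (E m))"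
    unfolding Mt.openin_mtopology by (rule conjunct2)
  then obtain r where r: "r > 0" "Mt.mball x0 r \<subseteq> Mt.mtopology interior_of (E m)"
    using x0 by blast
  have intE: "Mt.mtopology interior_of (E m) \<subseteq> E m" by (rule interior_of_subset)
  have x0E: "x0 \<in> E m" using x0 intE by (rule subsetD[rotated])
  then have x0Y: "x0 \<in> Y" and x0m: "\<And>i. \<phi> i x0 \<le> real m" unfolding E_def by auto
  obtain K where K: "(1/2::real)^(Suc K) < r" using pow_small[OF r(1)] by blast
  have A: "\<phi> i z \<le> 2 * real m" if z: "z \<in> Y" "SN K z < r" for z i
  proof -
    define w where "w = (\<lambda>j. x0 j + z j)"
    have wY: "w \<in> Y" unfolding w_def by (rule Yadd[OF x0Y z(1)])
    have "(\<lambda>j. x0 j - w j) = (\<lambda>j. (-1) * z j)" unfolding w_def by auto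
    then have "SN K (\<lambda>j. x0 j - w j) = SN K z" using SN_smul[where x=z and K=K and c="-1"] z YX by auto
    then have "dY Y x0 w < r" using dY_D2[OF YX x0Y wY, of K] K z by auto
    then have "w \<in> Mt.mball x0 r" using x0Y wY by simp
    then have "w \<in> E m" using r(2) intE by (meson subsetD)
    then have wm: "\<phi> i w \<le> real m" unfolding E_def by blast
    have "z = (\<lambda>j. w j + (\<lambda>j. - x0 j) j)" unfolding w_def by simp
    then have "\<phi> i z = \<phi> i (\<lambda>j. w j + (\<lambda>j. - x0 j) j)" by simp
    also have "\<dots> \<le> \<phi> i w + \<phi> i (\<lambda>j. - x0 j)" by (rule padd[OF wY Yneg[OF x0Y]])
    also have "\<dots> = \<phi> i w + \<phi> i x0" using pneg[OF x0Y] by simp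
    finally show ?thesis using wm x0m[of i] by simp
  qed
  have "\<forall>z\<in>Y. \<forall>i. \<phi> i z \<le> (4 * real m / r) * SN K z"
  proof (intro ballI allI)
    fix z i assume z: "z \<in> Y"
    have sn0: "0 \<le> SN K z" using z YX by (intro SN_nonneg) auto
    have sc: "\<phi> i (\<lambda>j. complex_of_real t * z j) = t * \<phi> i z" if "t > 0" for t
      using psm[OF z, of i "complex_of_real t"] that by simp
    have snsc: "SN K (\<lambda>j. complex_of_real t * z j) = t * SN K z" if "t > 0" for t
      using SN_smul[where x=z and K=K and c="complex_of_real t"] that z YX by auto
    show "\<phi> i z \<le> (4 * real m / r) * SN K z"
    proof (cases "SN K z > 0")
      case True
      define t where "t = r / (2 * SN K z)"
      have tpos: "t > 0" unfolding t_def using True r by simp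
      have "SN K (\<lambda>j. complex_of_real t * z j) = t * SN K z" by (rule snsc[OF tpos])
      also have "t * SN K z = r / 2" unfolding t_def using True by simp
      finally have "SN K (\<lambda>j. complex_of_real t * z j) = r / 2" .
      then have "\<phi> i (\<lambda>j. complex_of_real t * z j) \<le> 2 * real m"
        using A[OF Ysm[OF z]] r by simp
      then have "t * \<phi> i z \<le> 2 * real m" using sc[OF tpos] by simp
      then have "\<phi> i z \<le> 2 * real m / t" using tpos by (simp add: field_simps)
      also have "2 * real m / t = (4 * real m / r) * SN K z" unfolding t_def using True r by simp
      finally show ?thesis .
    next
      case False
      then have s0: "SN K z = 0" using sn0 by simp
      have "\<phi> i z \<le> 0"
      proof (rule ccontr)
        assume "\<not> \<phi> i z \<le> 0"
        then have pos: "\<phi> i z > 0" by simp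
        define t where "t = (2 * real m + 1) / \<phi> i z"
        have tpos: "t > 0" unfolding t_def using pos by simp
        have "SN K (\<lambda>j. complex_of_real t * z j) = 0" unfolding snsc[OF tpos] s0 by simp
        then have "\<phi> i (\<lambda>j. complex_of_real t * z j) \<le> 2 * real m"
          using A[OF Ysm[OF z]] r by simp
        then have "t * \<phi> i z \<le> 2 * real m" using sc[OF tpos] by simp
        moreover have "t * \<phi> i z = 2 * real m + 1" unfolding t_def using pos by simp
        ultimately show False by simp
      qed
      then show ?thesis using s0 by simp
    qed
  qed
  then show ?thesis by blast
qed

end

primrec ghS :: "(nat \<Rightarrow> cseq \<Rightarrow> complex) \<Rightarrow> (nat \<Rightarrow> cseq) \<Rightarrow> nat \<Rightarrow> cseq \<Rightarrow> complex" where
  "ghS F pt 0 = (\<lambda>w. 0)"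
| "ghS F pt (Suc i) = (\<lambda>w. ghS F pt i w +
     (if norm (F i (pt i)) \<le> norm (ghS F pt i (pt i) + F i (pt i)) then 1 else -1) * F i w)"

definition ghE :: "(nat \<Rightarrow> cseq \<Rightarrow> complex) \<Rightarrow> (nat \<Rightarrow> cseq) \<Rightarrow> nat \<Rightarrow> complex" where
  "ghE F pt i = (if norm (F i (pt i)) \<le> norm (ghS F pt i (pt i) + F i (pt i)) then 1 else -1)"

lemma ghS_Suc: "ghS F pt (Suc i) w = ghS F pt i w + ghE F pt i * F i w"
  unfolding ghE_def by simp

lemma ghS_sum: "ghS F pt i w = (\<Sum>l<i. ghE F pt l * F l w)"
  by (induction i) (simp_all del: ghS.simps(2) add: ghS_Suc)

lemma ghE_norm: "norm (ghE F pt i) = 1"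
  unfolding ghE_def by simp

lemma ghE_big: "norm (F i (pt i)) \<le> norm (ghS F pt (Suc i) (pt i))"
proof (cases "norm (F i (pt i)) \<le> norm (ghS F pt i (pt i) + F i (pt i))")
  case True
  then show ?thesis unfolding ghS_Suc ghE_def by simp
next
  case False
  let ?A = "ghS F pt i (pt i)" and ?B = "F i (pt i)"
  have "norm (2 * ?B) \<le> norm (?A + ?B) + norm (?A - ?B)"
  proof -
    have "2 * ?B = (?A + ?B) - (?A - ?B)" by simp
    then show ?thesis by (metis norm_triangle_ineq4)
  qed
  then have "norm ?B \<le> norm (?A - ?B)" using False by (simp add: norm_mult)
  then show ?thesis unfolding ghS_Suc ghE_def using False by simp
qed

context fk
begin

lemma norming:
  assumes z: "z \<in> X"
  shows "\<exists>f. (\<forall>x\<in>X. \<forall>y\<in>X. f (\<lambda>j. x j + y j) = f x + f y) \<and> (\<forall>x\<in>X. \<forall>c. f (\<lambda>j. c * x j) = c * f x)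
            \<and> (\<forall>x\<in>X. norm (f x) \<le> P k x) \<and> f z = complex_of_real (P k z)"
proof (cases "P k z = 0")
  case True
  then show ?thesis using P_nonneg by (intro exI[of _ "\<lambda>x. 0"]) auto
next
  case False
  then have "z \<noteq> (\<lambda>j. 0)" using P_zero by auto
  then obtain j0 where j0: "z j0 \<noteq> 0" by auto
  define g where "g w = w j0 / z j0 * complex_of_real (P k z)" for w :: cseq
  define M where "M = {(\<lambda>j. c * z j) | c. True}"
  have zM: "z \<in> M" unfolding M_def by (intro CollectI exI[of _ 1]) simp
  have "\<exists>F. (\<forall>x\<in>X. \<forall>y\<in>X. F (\<lambda>j. x j + y j) = F x + F y) \<and> (\<forall>x\<in>X. \<forall>c. F (\<lambda>j. c * x j) = c * F x)
            \<and> (\<forall>x\<in>X. norm (F x) \<le> P k x) \<and> (\<forall>x\<in>M. F x = g x)"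
  proof (rule hb_complex)
    show "(\<lambda>j. 0) \<in> X" by (rule zeroX)
    show "\<And>x y. x \<in> X \<Longrightarrow> y \<in> X \<Longrightarrow> (\<lambda>j. x j + y j) \<in> X" by (rule addX)
    show "\<And>x c. x \<in> X \<Longrightarrow> (\<lambda>j. c * x j) \<in> X" by (rule smulX)
    show "\<And>x y. x \<in> X \<Longrightarrow> y \<in> X \<Longrightarrow> P k (\<lambda>j. x j + y j) \<le> P k x + P k y" by (rule P_add)
    show "\<And>x c. x \<in> X \<Longrightarrow> P k (\<lambda>j. c * x j) = norm c * P k x" by (rule P_smul)
    show "\<And>x. x \<in> X \<Longrightarrow> 0 \<le> P k x" by (rule P_nonneg)
    show "M \<subseteq> X" unfolding M_def using smulX z by blast
    show "(\<lambda>j. 0) \<in> M" unfolding M_def by (intro CollectI exI[of _ 0]) simp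
    show "(\<lambda>j. x j + y j) \<in> M" if xyM: "x \<in> M" "y \<in> M" for x y
    proof -
      obtain c d where "x = (\<lambda>j. c * z j)" "y = (\<lambda>j. d * z j)" using xyM unfolding M_def by blast
      then have "(\<lambda>j. x j + y j) = (\<lambda>j. (c + d) * z j)" by (simp add: fun_eq_iff algebra_simps)
      then show ?thesis unfolding M_def by blast
    qed
    show "(\<lambda>j. c * x j) \<in> M" if xM: "x \<in> M" for x c
    proof -
      obtain d where "x = (\<lambda>j. d * z j)" using xM unfolding M_def by blast
      then have "(\<lambda>j. c * x j) = (\<lambda>j. (c * d) * z j)" by (simp add: fun_eq_iff algebra_simps)
      then show ?thesis unfolding M_def by blast
    qed
    show "\<And>x y. g (\<lambda>j. x j + y j) = g x + g y" unfolding g_def by (simp add: add_divide_distrib distrib_right)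
    show "\<And>x c. g (\<lambda>j. c * x j) = c * g x" unfolding g_def by (simp add: field_simps)
    show "norm (g x) \<le> P k x" if xM: "x \<in> M" for x
    proof -
      obtain d where d: "x = (\<lambda>j. d * z j)" using xM unfolding M_def by blast
      have "g x = d * complex_of_real (P k z)" unfolding g_def d using j0 by simp
      then have "norm (g x) = norm d * P k z" using P_nonneg[OF z] by (simp add: norm_mult)
      also have "\<dots> = P k x" unfolding d by (rule P_smul[OF z, symmetric])
      finally show ?thesis by simp
    qed
  qed
  then obtain F where F: "\<forall>x\<in>X. \<forall>y\<in>X. F (\<lambda>j. x j + y j) = F x + F y" "\<forall>x\<in>X. \<forall>c. F (\<lambda>j. c * x j) = c * F x"
    "\<forall>x\<in>X. norm (F x) \<le> P k x" "\<forall>x\<in>M. F x = g x" by blast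
  have "F z = complex_of_real (P k z)" using F(4) zM j0 unfolding g_def by simp
  then show ?thesis using F by blast
qed

end

lemma geo3: "summable (\<lambda>l. (1/3::real)^l * c)" "(\<Sum>l. (1/3::real)^l * c) = 3/2 * c"
proof -
  have s: "summable (\<lambda>l. (1/3::real)^l)" by (rule summable_geometric) simp
  then show "summable (\<lambda>l. (1/3::real)^l * c)" by (rule summable_mult2)
  have "(\<Sum>l. (1/3::real)^l) = 1 / (1 - 1/3)" by (rule suminf_geometric) simp
  then have h1: "(\<Sum>l. (1/3::real)^l) = 3/2" by simp
  have "(\<Sum>l. (1/3::real)^l * c) = (\<Sum>l. (1/3::real)^l) * c" by (rule suminf_mult2[OF s, symmetric])
  also have "\<dots> = 3/2 * c" unfolding h1 ..
  finally show "(\<Sum>l. (1/3::real)^l * c) = 3/2 * c" .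
qed

context fk
begin

lemma weak_bdd:
  assumes yX: "\<And>n. y n \<in> X" and wb: "\<And>f. f \<in> cdual X P \<Longrightarrow> \<exists>B. \<forall>n. norm (f (y n)) \<le> B"
  shows "\<exists>B. \<forall>n. P k (y n) \<le> B"
proof (rule ccontr)
  assume nb: "\<not> (\<exists>B. \<forall>n. P k (y n) \<le> B)"
  have big: "\<exists>n. B < P k (y n)" for B using nb by (meson not_le)
  define m where "m i = (SOME n. 2 * 3^i * (real i + 1) < P k (y n))" for i
  have mbig: "2 * 3^i * (real i + 1) < P k (y (m i))" for i
    unfolding m_def by (rule someI_ex[of "\<lambda>n. 2 * 3^i * (real i + 1) < P k (y n)"]) (rule big)
  define pt where "pt i = y (m i)" for i
  have ptX: "pt i \<in> X" for i unfolding pt_def by (rule yX)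
  define NP where "NP f z \<longleftrightarrow> (\<forall>x\<in>X. \<forall>y\<in>X. f (\<lambda>j. x j + y j) = f x + f y) \<and> (\<forall>x\<in>X. \<forall>c. f (\<lambda>j. c * x j) = c * f x)
            \<and> (\<forall>x\<in>X. norm (f x) \<le> P k x) \<and> f z = complex_of_real (P k z)" for f :: "cseq \<Rightarrow> complex" and z
  define fz where "fz i = (SOME f. NP f (pt i))" for i
  have fzNP: "NP (fz i) (pt i)" for i
    unfolding fz_def by (rule someI_ex[of "\<lambda>f. NP f (pt i)"]) (use norming[OF ptX, of k] NP_def in blast)
  have fz_add: "fz i (\<lambda>j. x j + y j) = fz i x + fz i y" if "x \<in> X" "y \<in> X" for i x y
    using fzNP[of i] that unfolding NP_def by blast
  have fz_sm: "fz i (\<lambda>j. c * x j) = c * fz i x" if "x \<in> X" for i x c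
    using fzNP[of i] that unfolding NP_def by blast
  have fz_bd: "norm (fz i x) \<le> P k x" if "x \<in> X" for i x
    using fzNP[of i] that unfolding NP_def by blast
  have fz_pt: "fz i (pt i) = complex_of_real (P k (pt i))" for i
    using fzNP[of i] unfolding NP_def by blast
  define F where "F i w = complex_of_real ((1/3)^i) * fz i w" for i w
  define t where "t w l = ghE F pt l * F l w" for w l
  have tbd: "norm (t x l) \<le> (1/3)^l * P k x" if "x \<in> X" for x l
  proof -
    have "norm (t x l) = \<bar>(1/3::real)^l\<bar> * norm (fz l x)"
      unfolding t_def F_def by (simp only: norm_mult ghE_norm norm_of_real mult_1)
    also have "\<dots> = (1/3)^l * norm (fz l x)" by simp
    also have "\<dots> \<le> (1/3)^l * P k x" using fz_bd[OF that, of l] by (intro mult_left_mono) auto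
    finally show ?thesis .
  qed
  have tsum: "summable (\<lambda>l. norm (t x l))" if "x \<in> X" for x
    by (rule summable_comparison_test[OF _ geo3(1)[of "P k x"]]) (use tbd[OF that] in simp)
  have tsum2: "summable (t x)" if "x \<in> X" for x
    by (rule summable_norm_cancel[OF tsum[OF that]])
  define Fin where "Fin w = (\<Sum>l. t w l)" for w
  have Fin_add: "Fin (\<lambda>j. x j + y j) = Fin x + Fin y" if "x \<in> X" "y \<in> X" for x y
  proof -
    have "t (\<lambda>j. x j + y j) = (\<lambda>l. t x l + t y l)"
      unfolding t_def F_def using fz_add[OF that] by (simp add: algebra_simps fun_eq_iff)
    then show ?thesis unfolding Fin_def using suminf_add[OF tsum2[OF that(1)] tsum2[OF that(2)]] by simp
  qed
  have Fin_sm: "Fin (\<lambda>j. c * x j) = c * Fin x" if "x \<in> X" for x c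
  proof -
    have "t (\<lambda>j. c * x j) = (\<lambda>l. c * t x l)"
      unfolding t_def F_def using fz_sm[OF that] by (simp add: algebra_simps fun_eq_iff)
    then show ?thesis unfolding Fin_def using suminf_mult[OF tsum2[OF that], of c] by simp
  qed
  have Fin_bd: "norm (Fin x) \<le> 3/2 * P k x" if "x \<in> X" for x
  proof -
    have "norm (Fin x) \<le> (\<Sum>l. norm (t x l))" unfolding Fin_def by (rule summable_norm[OF tsum[OF that]])
    also have "\<dots> \<le> (\<Sum>l. (1/3)^l * P k x)"
      by (rule suminf_le[OF _ tsum[OF that] geo3(1)]) (rule tbd[OF that])
    also have "\<dots> = 3/2 * P k x" by (rule geo3(2))
    finally show ?thesis .
  qed
  have "Fin \<in> cdual X P"
    unfolding cdual_def
  proof (intro CollectI conjI ballI allI)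
    show "\<And>x y. x \<in> X \<Longrightarrow> y \<in> X \<Longrightarrow> Fin (\<lambda>j. x j + y j) = Fin x + Fin y" by (rule Fin_add)
    show "\<And>x c. x \<in> X \<Longrightarrow> Fin (\<lambda>j. c * x j) = c * Fin x" by (rule Fin_sm)
    have "\<forall>x\<in>X. norm (Fin x) \<le> 3/2 * SN k x"
    proof
      fix x assume x: "x \<in> X"
      have "P k x \<le> SN k x" by (rule P_le_SN[OF x]) simp
      then show "norm (Fin x) \<le> 3/2 * SN k x" using Fin_bd[OF x] by linarith
    qed
    then show "\<exists>N C. \<forall>x\<in>X. norm (Fin x) \<le> C * SN N x" by blast
  qed
  then obtain B where B: "\<And>n. norm (Fin (y n)) \<le> B" using wb by blast
  obtain i :: nat where "B \<le> real i" using real_arch_simple by blast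
  then have iB: "B < real i + 1" by linarith
  let ?x = "pt i"
  have Pn: "0 \<le> P k ?x" by (rule P_nonneg[OF ptX])
  have split: "Fin ?x = (\<Sum>l. t ?x (l + Suc i)) + (\<Sum>l<Suc i. t ?x l)"
    unfolding Fin_def by (rule suminf_split_initial_segment[OF tsum2[OF ptX]])
  have head: "(\<Sum>l<Suc i. t ?x l) = ghS F pt (Suc i) ?x"
    unfolding t_def ghS_sum ..
  have "norm (F i ?x) = (1/3)^i * P k ?x"
    unfolding F_def fz_pt using Pn by (simp add: norm_mult norm_power norm_divide)
  then have hd: "(1/3)^i * P k ?x \<le> norm (\<Sum>l<Suc i. t ?x l)"
    unfolding head using ghE_big[of F i pt] by simp
  have tl: "norm (\<Sum>l. t ?x (l + Suc i)) \<le> 1/2 * ((1/3)^i * P k ?x)"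
  proof -
    have s1: "summable (\<lambda>l. norm (t ?x (l + Suc i)))"
      using summable_ignore_initial_segment[OF tsum[OF ptX[of i]], where k="Suc i"] by simp
    have "norm (\<Sum>l. t ?x (l + Suc i)) \<le> (\<Sum>l. norm (t ?x (l + Suc i)))" by (rule summable_norm[OF s1])
    also have "\<dots> \<le> (\<Sum>l. (1/3)^l * ((1/3)^(Suc i) * P k ?x))"
    proof (rule suminf_le[OF _ s1 geo3(1)])
      fix l
      have "norm (t ?x (l + Suc i)) \<le> (1/3)^(l + Suc i) * P k ?x" by (rule tbd[OF ptX])
      also have "\<dots> = (1/3)^l * ((1/3)^(Suc i) * P k ?x)" by (simp add: power_add)
      finally show "norm (t ?x (l + Suc i)) \<le> (1/3)^l * ((1/3)^(Suc i) * P k ?x)" .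
    qed
    also have "\<dots> = 3/2 * ((1/3)^(Suc i) * P k ?x)" by (rule geo3(2))
    also have "\<dots> = 1/2 * ((1/3)^i * P k ?x)" by simp
    finally show ?thesis .
  qed
  have "norm (\<Sum>l<Suc i. t ?x l) \<le> norm (Fin ?x) + norm (\<Sum>l. t ?x (l + Suc i))"
    unfolding split by (metis add_diff_cancel_left' norm_triangle_ineq4 add.commute)
  then have low: "1/2 * ((1/3)^i * P k ?x) \<le> norm (Fin ?x)" using hd tl by linarith
  have "(1/3::real)^i * 3^i = 1" by (simp add: power_mult_distrib[symmetric])
  then have "1/2 * ((1/3)^i * (2 * 3^i * (real i + 1))) = real i + 1" by (simp add: algebra_simps)
  moreover have "1/2 * ((1/3)^i * (2 * 3^i * (real i + 1))) < 1/2 * ((1/3)^i * P k ?x)"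
  proof -
    have pos: "0 < 1/2 * (1/3::real)^i" by simp
    have "(1/2 * (1/3::real)^i) * (2 * 3^i * (real i + 1)) < (1/2 * (1/3)^i) * P k ?x"
      unfolding pt_def by (rule mult_strict_left_mono[OF mbig pos])
    then show ?thesis by (simp only: mult.assoc)
  qed
  ultimately have "real i + 1 < norm (Fin ?x)" using low by linarith
  moreover have "norm (Fin ?x) \<le> B" unfolding pt_def by (rule B)
  ultimately show False using iB by linarith
qed

end

lemma avg_add: "avg p q n (\<lambda>j. u j * (x j + y j)) = avg p q n (\<lambda>j. u j * x j) + avg p q n (\<lambda>j. u j * y j)"
  unfolding avg_coef by (simp add: algebra_simps sum.distrib)
lemma avg_smul: "avg p q n (\<lambda>j. u j * (c * x j)) = c * avg p q n (\<lambda>j. u j * x j)"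
  unfolding avg_coef by (simp add: algebra_simps sum_distrib_left)

context fkpq
begin

lemma DS_mem: "x \<in> DSx \<longleftrightarrow> x \<in> X \<and> (\<forall>k. (\<lambda>n. P k (\<lambda>j. Tn p q n x j - x j)) \<longlonglongrightarrow> 0)"
  unfolding DS_def by simp

lemma DS_zero: "(\<lambda>j. 0) \<in> DSx"
proof -
  have "Tn p q n (\<lambda>j. 0) = (\<lambda>j. 0)" for n unfolding Tn_coef by simp
  then show ?thesis unfolding DS_mem using zeroX P_zero by simp
qed

lemma DS_add: "x \<in> DSx \<Longrightarrow> y \<in> DSx \<Longrightarrow> (\<lambda>j. x j + y j) \<in> DSx"
proof -
  assume x: "x \<in> DSx" and y: "y \<in> DSx"
  then have xX: "x \<in> X" and yX: "y \<in> X" and tx: "\<And>k. (\<lambda>n. P k (\<lambda>j. Tn p q n x j - x j)) \<longlonglongrightarrow> 0"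
    and ty: "\<And>k. (\<lambda>n. P k (\<lambda>j. Tn p q n y j - y j)) \<longlonglongrightarrow> 0" unfolding DS_mem by auto
  have "(\<lambda>n. P k (\<lambda>j. Tn p q n (\<lambda>j. x j + y j) j - (x j + y j))) \<longlonglongrightarrow> 0" for k
  proof -
    have le: "norm (P k (\<lambda>j. Tn p q n (\<lambda>j. x j + y j) j - (x j + y j)))
        \<le> P k (\<lambda>j. Tn p q n x j - x j) + P k (\<lambda>j. Tn p q n y j - y j)" for n
    proof -
      have e: "(\<lambda>j. Tn p q n (\<lambda>j. x j + y j) j - (x j + y j)) =
          (\<lambda>j. (\<lambda>j. Tn p q n x j - x j) j + (\<lambda>j. Tn p q n y j - y j) j)"
        unfolding Tn_add by (simp add: fun_eq_iff algebra_simps)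
      have m: "(\<lambda>j. Tn p q n (\<lambda>j. x j + y j) j - (x j + y j)) \<in> X"
        using TnX addX[OF xX yX] by (rule diffX)
      have "P k (\<lambda>j. Tn p q n (\<lambda>j. x j + y j) j - (x j + y j))
          \<le> P k (\<lambda>j. Tn p q n x j - x j) + P k (\<lambda>j. Tn p q n y j - y j)"
        unfolding e by (intro P_add diffX TnX xX yX)
      then show ?thesis using P_nonneg[OF m] by simp
    qed
    have "(\<lambda>n. P k (\<lambda>j. Tn p q n x j - x j) + P k (\<lambda>j. Tn p q n y j - y j)) \<longlonglongrightarrow> 0 + 0"
      by (intro tendsto_add tx ty)
    then have t0: "(\<lambda>n. P k (\<lambda>j. Tn p q n x j - x j) + P k (\<lambda>j. Tn p q n y j - y j)) \<longlonglongrightarrow> 0" by simp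
    have "\<forall>n. norm (P k (\<lambda>j. Tn p q n (\<lambda>j. x j + y j) j - (x j + y j)))
        \<le> P k (\<lambda>j. Tn p q n x j - x j) + P k (\<lambda>j. Tn p q n y j - y j)" using le by blast
    then show ?thesis by (rule Lim_null_comparison[OF always_eventually t0])
  qed
  then show ?thesis unfolding DS_mem using addX[OF xX yX] by simp
qed

lemma DS_smul: "x \<in> DSx \<Longrightarrow> (\<lambda>j. c * x j) \<in> DSx"
proof -
  assume x: "x \<in> DSx"
  then have xX: "x \<in> X" and tx: "\<And>k. (\<lambda>n. P k (\<lambda>j. Tn p q n x j - x j)) \<longlonglongrightarrow> 0"
    unfolding DS_mem by auto
  have "(\<lambda>n. P k (\<lambda>j. Tn p q n (\<lambda>j. c * x j) j - c * x j)) \<longlonglongrightarrow> 0" for k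
  proof -
    have e: "(\<lambda>j. Tn p q n (\<lambda>j. c * x j) j - c * x j) = (\<lambda>j. c * (\<lambda>j. Tn p q n x j - x j) j)" for n
      unfolding Tn_smul by (simp add: fun_eq_iff algebra_simps)
    have "P k (\<lambda>j. Tn p q n (\<lambda>j. c * x j) j - c * x j) = norm c * P k (\<lambda>j. Tn p q n x j - x j)" for n
      unfolding e by (intro P_smul diffX TnX xX)
    moreover have "(\<lambda>n. norm c * P k (\<lambda>j. Tn p q n x j - x j)) \<longlonglongrightarrow> norm c * 0"
      by (intro tendsto_mult tendsto_const tx)
    ultimately show ?thesis by simp
  qed
  then show ?thesis unfolding DS_mem using smulX[OF xX] by simp
qed

lemma unit_DS: "unit_seq j \<in> DSx"
proof -
  have "(\<lambda>n. P k (\<lambda>i. Tn p q n (unit_seq j) i - unit_seq j i)) \<longlonglongrightarrow> 0" for k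
  proof -
    have e: "(\<lambda>i. Tn p q n (unit_seq j) i - unit_seq j i) = (\<lambda>i. (coef p q n j - 1) * unit_seq j i)" for n
      unfolding Tn_coef unit_seq_def by (simp add: fun_eq_iff algebra_simps)
    have "P k (\<lambda>i. Tn p q n (unit_seq j) i - unit_seq j i) = norm (coef p q n j - 1) * P k (unit_seq j)" for n
      unfolding e by (rule P_smul[OF unitX])
    moreover have "(\<lambda>n. coef p q n j - 1) \<longlonglongrightarrow> 1 - 1"
      by (intro tendsto_diff coef_lim pq ql tendsto_const)
    then have "(\<lambda>n. norm (coef p q n j - 1) * P k (unit_seq j)) \<longlonglongrightarrow> norm (1 - 1 :: complex) * P k (unit_seq j)"
      by (intro tendsto_mult tendsto_norm tendsto_const)
    ultimately show ?thesis by simp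
  qed
  then show ?thesis unfolding DS_mem using unitX by simp
qed

lemma contf_Tn: "contf (\<lambda>x. P k (Tn p q n x))"
proof -
  have "contf (\<lambda>x. \<Sum>j<q n. (norm (coef p q n j) * P k (unit_seq j)) * norm (x j))"
    by (intro contf_sum contf_scale contf_coord) (auto intro!: mult_nonneg_nonneg P_nonneg unitX)
  moreover have "P k (Tn p q n x) \<le> (\<Sum>j<q n. (norm (coef p q n j) * P k (unit_seq j)) * norm (x j))" if "x \<in> X" for x
  proof -
    have "P k (Tn p q n x) \<le> (\<Sum>j<q n. norm (coef p q n j * x j) * P k (unit_seq j))"
      unfolding Tn_lc by (rule P_lc) simp
    also have "\<dots> = (\<Sum>j<q n. (norm (coef p q n j) * P k (unit_seq j)) * norm (x j))"
      by (simp add: norm_mult algebra_simps)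
    finally show ?thesis .
  qed
  ultimately show ?thesis by (rule contf_mono)
qed

lemma contf_avg: "contf (\<lambda>x. norm (avg p q n (\<lambda>j. u j * x j)))"
proof -
  have "contf (\<lambda>x. \<Sum>j<q n. norm (coef p q n j * u j) * norm (x j))"
    by (intro contf_sum contf_scale contf_coord) auto
  moreover have "norm (avg p q n (\<lambda>j. u j * x j)) \<le> (\<Sum>j<q n. norm (coef p q n j * u j) * norm (x j))" for x
  proof -
    have "norm (avg p q n (\<lambda>j. u j * x j)) \<le> (\<Sum>j<q n. norm (coef p q n j * (u j * x j)))"
      unfolding avg_coef by (rule norm_sum)
    also have "\<dots> = (\<Sum>j<q n. norm (coef p q n j * u j) * norm (x j))"
      by (simp add: norm_mult algebra_simps)
    finally show ?thesis .
  qed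
  ultimately show ?thesis by (rule contf_mono)
qed

end

context fkpq
begin

lemma conv_bdd: "convergent (a :: nat \<Rightarrow> complex) \<Longrightarrow> \<exists>B. \<forall>n. norm (a n) \<le> B"
proof -
  assume "convergent a"
  then have "Bseq a" by (rule convergent_imp_Bseq)
  then show ?thesis unfolding Bseq_def by blast
qed

lemma S1:
  assumes H: "has_Fsigma X P p q" and x: "x \<in> X"
  shows "\<exists>B. \<forall>n. P k (Tn p q n x) \<le> B"
proof (rule weak_bdd)
  show "\<And>n. Tn p q n x \<in> X" by (rule TnX)
  fix f assume f: "f \<in> cdual X P"
  have "x \<in> DFplus X P p q" using H x unfolding has_Fsigma_def by blast
  then have "convergent (\<lambda>n. avg p q n (\<lambda>j. x j * f (unit_seq j)))"
    unfolding DFplus_def avg_def using f by blast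
  then have "convergent (\<lambda>n. f (Tn p q n x))" using cd_Tn[OF f] by simp
  then show "\<exists>B. \<forall>n. norm (f (Tn p q n x)) \<le> B" by (rule conv_bdd)
qed

lemma S2:
  assumes H: "has_Fsigma X P p q"
  shows "\<exists>N C. \<forall>x\<in>X. \<forall>n. P k (Tn p q n x) \<le> C * SN N x"
proof (rule BS)
  show "X \<subseteq> X" "(\<lambda>j. 0) \<in> X" by (auto simp: zeroX)
  show "\<And>x y. x \<in> X \<Longrightarrow> y \<in> X \<Longrightarrow> (\<lambda>j. x j + y j) \<in> X" by (rule addX)
  show "\<And>x c. x \<in> X \<Longrightarrow> (\<lambda>j. c * x j) \<in> X" by (rule smulX)
  show "\<And>s x. (\<And>n. s n \<in> X) \<Longrightarrow> x \<in> X \<Longrightarrow> (\<And>k. (\<lambda>n. P k (\<lambda>j. s n j - x j)) \<longlonglongrightarrow> 0) \<Longrightarrow> x \<in> X"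
    by simp
  show "P k (Tn p q n (\<lambda>j. x j + y j)) \<le> P k (Tn p q n x) + P k (Tn p q n y)" if "x \<in> X" "y \<in> X" for n x y
    unfolding Tn_add by (rule P_add[OF TnX TnX])
  show "P k (Tn p q n (\<lambda>j. c * x j)) = norm c * P k (Tn p q n x)" if "x \<in> X" for n x c
    unfolding Tn_smul by (rule P_smul[OF TnX])
  show "\<exists>N C. \<forall>x\<in>X. P k (Tn p q n x) \<le> C * SN N x" for n
    using contf_Tn[of k n] unfolding contf_def .
  show "\<exists>B. \<forall>n. P k (Tn p q n x) \<le> B" if "x \<in> X" for x
    by (rule S1[OF H that])
qed

lemma S3:
  assumes H: "has_Fsigma X P p q"
    and s: "\<And>n. s n \<in> DSx" and x: "x \<in> X" and lim: "\<And>k. (\<lambda>n. P k (\<lambda>j. s n j - x j)) \<longlonglongrightarrow> 0"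
  shows "x \<in> DSx"
proof -
  have sX: "\<And>n. s n \<in> X" using s DS_X by blast
  have "(\<lambda>n. P k (\<lambda>j. Tn p q n x j - x j)) \<longlonglongrightarrow> 0" for k
  proof (rule order_tendstoI)
    fix a :: real assume "a < 0"
    then show "eventually (\<lambda>n. a < P k (\<lambda>j. Tn p q n x j - x j)) sequentially"
      using P_nonneg[OF diffX[OF TnX x]] by (intro always_eventually) (auto intro: less_le_trans)
  next
    fix e :: real assume e: "e > 0"
    obtain N C where NC: "\<forall>x\<in>X. \<forall>n. P k (Tn p q n x) \<le> C * SN N x" using S2[OF H] by blast
    have l1: "(\<lambda>m. C * SN N (\<lambda>j. x j - s m j)) \<longlonglongrightarrow> C * 0"
    proof (intro tendsto_mult tendsto_const SN_tendsto0)
      fix k' show "(\<lambda>m. P k' (\<lambda>j. x j - s m j)) \<longlonglongrightarrow> 0"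
        using lim[of k'] P_sym[OF sX x] by simp
    qed
    have "eventually (\<lambda>m. C * SN N (\<lambda>j. x j - s m j) < e/3) sequentially"
      using l1 e by (intro order_tendstoD(2)) auto
    moreover have "eventually (\<lambda>m. P k (\<lambda>j. s m j - x j) < e/3) sequentially"
      using lim[of k] e by (intro order_tendstoD(2)) auto
    ultimately have "eventually (\<lambda>m. C * SN N (\<lambda>j. x j - s m j) < e/3 \<and> P k (\<lambda>j. s m j - x j) < e/3) sequentially"
      by (rule eventually_conj)
    then obtain M where "\<forall>m\<ge>M. C * SN N (\<lambda>j. x j - s m j) < e/3 \<and> P k (\<lambda>j. s m j - x j) < e/3"
      unfolding eventually_sequentially by blast
    then obtain m where m1: "C * SN N (\<lambda>j. x j - s m j) < e/3" and m2: "P k (\<lambda>j. s m j - x j) < e/3"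
      by blast
    have "(\<lambda>n. P k (\<lambda>j. Tn p q n (s m) j - s m j)) \<longlonglongrightarrow> 0" using s[of m] unfolding DS_mem by blast
    then have "eventually (\<lambda>n. P k (\<lambda>j. Tn p q n (s m) j - s m j) < e/3) sequentially"
      using e by (intro order_tendstoD(2)) auto
    then show "eventually (\<lambda>n. P k (\<lambda>j. Tn p q n x j - x j) < e) sequentially"
    proof (rule eventually_mono)
      fix n assume n3: "P k (\<lambda>j. Tn p q n (s m) j - s m j) < e/3"
      have "P k (\<lambda>j. Tn p q n x j - x j) \<le> P k (\<lambda>j. Tn p q n x j - Tn p q n (s m) j) + P k (\<lambda>j. Tn p q n (s m) j - x j)"
        by (rule P_tri[OF TnX TnX x])
      also have "P k (\<lambda>j. Tn p q n (s m) j - x j) \<le> P k (\<lambda>j. Tn p q n (s m) j - s m j) + P k (\<lambda>j. s m j - x j)"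
        by (rule P_tri[OF TnX sX x])
      also have "P k (\<lambda>j. Tn p q n x j - Tn p q n (s m) j) = P k (Tn p q n (\<lambda>j. x j - s m j))"
        unfolding Tn_diff ..
      also have "\<dots> \<le> C * SN N (\<lambda>j. x j - s m j)" using NC diffX[OF x sX[of m]] by blast
      finally show "P k (\<lambda>j. Tn p q n x j - x j) < e" using m1 m2 n3 by linarith
    qed
  qed
  then show ?thesis unfolding DS_mem using x by simp
qed

end

context fkpq
begin

lemma HL:
  assumes H: "has_Fsigma X P p q"
  shows "ddual p q DSx \<subseteq> ddual p q X"
proof
  fix u assume u: "u \<in> ddual p q DSx"
  have conv: "convergent (\<lambda>n. avg p q n (\<lambda>j. u j * x j))" if "x \<in> DSx" for x
    using u that unfolding ddual_def mem_sigma by blast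
  have "\<exists>N C. \<forall>x\<in>DSx. \<forall>n. norm (avg p q n (\<lambda>j. u j * x j)) \<le> C * SN N x"
  proof (rule BS)
    show "DSx \<subseteq> X" by (rule DS_X)
    show "(\<lambda>j. 0) \<in> DSx" by (rule DS_zero)
    show "\<And>x y. x \<in> DSx \<Longrightarrow> y \<in> DSx \<Longrightarrow> (\<lambda>j. x j + y j) \<in> DSx" by (rule DS_add)
    show "\<And>x c. x \<in> DSx \<Longrightarrow> (\<lambda>j. c * x j) \<in> DSx" by (rule DS_smul)
    show "\<And>s x. (\<And>n. s n \<in> DSx) \<Longrightarrow> x \<in> X \<Longrightarrow> (\<And>k. (\<lambda>n. P k (\<lambda>j. s n j - x j)) \<longlonglongrightarrow> 0) \<Longrightarrow> x \<in> DSx"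
      by (rule S3[OF H])
    show "norm (avg p q n (\<lambda>j. u j * (x j + y j))) \<le> norm (avg p q n (\<lambda>j. u j * x j)) + norm (avg p q n (\<lambda>j. u j * y j))"
      for n x y unfolding avg_add by (rule norm_triangle_ineq)
    show "norm (avg p q n (\<lambda>j. u j * (c * x j))) = norm c * norm (avg p q n (\<lambda>j. u j * x j))"
      for n x c unfolding avg_smul by (rule norm_mult)
    show "\<exists>N C. \<forall>x\<in>DSx. norm (avg p q n (\<lambda>j. u j * x j)) \<le> C * SN N x" for n
      using contf_avg[of n u] DS_X unfolding contf_def by blast
    show "\<exists>B. \<forall>n. norm (avg p q n (\<lambda>j. u j * x j)) \<le> B" if "x \<in> DSx" for x
      by (rule conv_bdd[OF conv[OF that]])
  qed
  then obtain N C where NC: "\<And>x n. x \<in> DSx \<Longrightarrow> norm (avg p q n (\<lambda>j. u j * x j)) \<le> C * SN N x" by blast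
  define C' where "C' = max C 0"
  have C'0: "C' \<ge> 0" unfolding C'_def by simp
  have NC': "norm (avg p q n (\<lambda>j. u j * x j)) \<le> C' * SN N x" if "x \<in> DSx" for x n
  proof -
    have "C * SN N x \<le> C' * SN N x" unfolding C'_def
      using SN_nonneg[of x N] that DS_X by (intro mult_right_mono) auto
    then show ?thesis using NC[OF that, of n] by linarith
  qed
  define g where "g x = lim (\<lambda>n. avg p q n (\<lambda>j. u j * x j))" for x
  have gt: "(\<lambda>n. avg p q n (\<lambda>j. u j * x j)) \<longlonglongrightarrow> g x" if "x \<in> DSx" for x
    unfolding g_def using conv[OF that] by (simp add: convergent_LIMSEQ_iff)
  have "\<exists>F. (\<forall>x\<in>X. \<forall>y\<in>X. F (\<lambda>j. x j + y j) = F x + F y) \<and> (\<forall>x\<in>X. \<forall>c. F (\<lambda>j. c * x j) = c * F x)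
            \<and> (\<forall>x\<in>X. norm (F x) \<le> C' * SN N x) \<and> (\<forall>x\<in>DSx. F x = g x)"
  proof (rule hb_complex)
    show "(\<lambda>j. 0) \<in> X" by (rule zeroX)
    show "\<And>x y. x \<in> X \<Longrightarrow> y \<in> X \<Longrightarrow> (\<lambda>j. x j + y j) \<in> X" by (rule addX)
    show "\<And>x c. x \<in> X \<Longrightarrow> (\<lambda>j. c * x j) \<in> X" by (rule smulX)
    show "C' * SN N (\<lambda>j. x j + y j) \<le> C' * SN N x + C' * SN N y" if "x \<in> X" "y \<in> X" for x y
      using mult_left_mono[OF SN_add[OF that, where K=N] C'0] by (simp add: algebra_simps)
    show "C' * SN N (\<lambda>j. c * x j) = norm c * (C' * SN N x)" if "x \<in> X" for x c
      using SN_smul[OF that, where K=N and c=c] by simp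
    show "0 \<le> C' * SN N x" if "x \<in> X" for x using C'0 SN_nonneg[OF that] by simp
    show "DSx \<subseteq> X" by (rule DS_X)
    show "(\<lambda>j. 0) \<in> DSx" by (rule DS_zero)
    show "\<And>x y. x \<in> DSx \<Longrightarrow> y \<in> DSx \<Longrightarrow> (\<lambda>j. x j + y j) \<in> DSx" by (rule DS_add)
    show "\<And>x c. x \<in> DSx \<Longrightarrow> (\<lambda>j. c * x j) \<in> DSx" by (rule DS_smul)
    show "g (\<lambda>j. x j + y j) = g x + g y" if "x \<in> DSx" "y \<in> DSx" for x y
    proof -
      have "(\<lambda>n. avg p q n (\<lambda>j. u j * x j) + avg p q n (\<lambda>j. u j * y j)) \<longlonglongrightarrow> g x + g y"
        by (intro tendsto_add gt that)
      then have "(\<lambda>n. avg p q n (\<lambda>j. u j * (x j + y j))) \<longlonglongrightarrow> g x + g y" unfolding avg_add .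
      moreover have "(\<lambda>n. avg p q n (\<lambda>j. u j * (x j + y j))) \<longlonglongrightarrow> g (\<lambda>j. x j + y j)"
        using gt[OF DS_add[OF that]] by simp
      ultimately show ?thesis using LIMSEQ_unique by blast
    qed
    show "g (\<lambda>j. c * x j) = c * g x" if "x \<in> DSx" for x c
    proof -
      have "(\<lambda>n. c * avg p q n (\<lambda>j. u j * x j)) \<longlonglongrightarrow> c * g x"
        by (intro tendsto_mult tendsto_const gt that)
      then have "(\<lambda>n. avg p q n (\<lambda>j. u j * (c * x j))) \<longlonglongrightarrow> c * g x" unfolding avg_smul .
      moreover have "(\<lambda>n. avg p q n (\<lambda>j. u j * (c * x j))) \<longlonglongrightarrow> g (\<lambda>j. c * x j)"
        using gt[OF DS_smul[OF that]] by simp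
      ultimately show ?thesis using LIMSEQ_unique by blast
    qed
    show "norm (g x) \<le> C' * SN N x" if "x \<in> DSx" for x
    proof (rule LIMSEQ_le_const2)
      show "(\<lambda>n. norm (avg p q n (\<lambda>j. u j * x j))) \<longlonglongrightarrow> norm (g x)" by (intro tendsto_norm gt that)
      show "\<exists>N'. \<forall>n\<ge>N'. norm (avg p q n (\<lambda>j. u j * x j)) \<le> C' * SN N x" using NC'[OF that] by blast
    qed
  qed
  then obtain F where Fadd: "\<forall>x\<in>X. \<forall>y\<in>X. F (\<lambda>j. x j + y j) = F x + F y"
    and Fsm: "\<forall>x\<in>X. \<forall>c. F (\<lambda>j. c * x j) = c * F x"
    and Fbd: "\<forall>x\<in>X. norm (F x) \<le> C' * SN N x" and Fg: "\<forall>x\<in>DSx. F x = g x" by blast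
  have Fcd: "F \<in> cdual X P" unfolding cdual_def using Fadd Fsm Fbd by blast
  have Fu: "F (unit_seq j) = u j" for j
  proof -
    have e: "avg p q n (\<lambda>i. u i * unit_seq j i) = coef p q n j * u j" for n
    proof -
      have "avg p q n (\<lambda>i. u i * unit_seq j i) = (\<Sum>i<q n. if i = j then coef p q n j * u j else 0)"
        unfolding avg_coef unit_seq_def by (intro sum.cong) auto
      also have "\<dots> = (if j < q n then coef p q n j * u j else 0)" by simp
      also have "\<dots> = coef p q n j * u j" using coef_zero[of q n j p] by auto
      finally show ?thesis .
    qed
    have "(\<lambda>n. coef p q n j * u j) \<longlonglongrightarrow> 1 * u j"
      by (intro tendsto_mult coef_lim pq ql tendsto_const)
    then have "(\<lambda>n. avg p q n (\<lambda>i. u i * unit_seq j i)) \<longlonglongrightarrow> u j" unfolding e by simp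
    moreover have "(\<lambda>n. avg p q n (\<lambda>i. u i * unit_seq j i)) \<longlonglongrightarrow> g (unit_seq j)" by (rule gt[OF unit_DS])
    ultimately have "g (unit_seq j) = u j" using LIMSEQ_unique by blast
    then show ?thesis using Fg unit_DS by simp
  qed
  have "\<forall>y\<in>X. (\<lambda>n. u n * y n) \<in> sigma_s p q"
  proof
    fix y assume y: "y \<in> X"
    then have "y \<in> DFplus X P p q" using H unfolding has_Fsigma_def by blast
    then have "convergent (\<lambda>n. avg p q n (\<lambda>j. y j * F (unit_seq j)))"
      unfolding DFplus_def avg_def using Fcd by blast
    then show "(\<lambda>n. u n * y n) \<in> sigma_s p q" unfolding mem_sigma Fu by (simp add: mult.commute)
  qed
  then show "u \<in> ddual p q X" unfolding ddual_def by blast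
qed

end

theorem mainTheorem15:
  fixes X :: "cseq set" and P :: "nat \<Rightarrow> cseq \<Rightarrow> real" and p q :: "nat \<Rightarrow> nat"
  assumes "FK_space X P"
    and "phi \<subseteq> X"
    and "\<And>n. p n < q n"
    and "filterlim q at_top sequentially"
  shows "(has_Fsigma X P p q \<longleftrightarrow> X \<subseteq> ddual p q (ddual p q (DS X P p q))) \<and>
         (has_Fsigma X P p q \<longleftrightarrow> X \<subseteq> ddual p q (ddual p q (DW X P p q))) \<and>
         (has_Fsigma X P p q \<longleftrightarrow> X \<subseteq> ddual p q (ddual p q (DF X P p q))) \<and>
         (has_Fsigma X P p q \<longleftrightarrow> ddual p q X = ddual p q (DS X P p q)) \<and>
         (has_Fsigma X P p q \<longleftrightarrow> ddual p q X = ddual p q (DF X P p q))"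
proof -
  interpret fkpq X P p q
    by (unfold_locales) (use assms in auto)
  show ?thesis by (rule final_assembly[OF HL])
qed


end
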